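(* Let $n\ge2$, $k\ge1$, $i\in\{1,\dots,n\}$, $t\in\mathbb Z$, and $a\in U(\bar{\mathfrak n}_-)$ (regarded in $\widetilde{U(\bar{\mathfrak n})}$ via $\iota$). Then $$\mathcal R^i_t\,a\in\iota(I_{k\Lambda_0})+\widetilde{U(\bar{\mathfrak n})\bar{\mathfrak n}_+}.$$
   Context: $\mathfrak g=\mathfrak{sl}(n+1)$ with simple roots $\alpha_1,\dots,\alpha_n$, positive roots $\Delta_+$, root vectors $x_\alpha$ with $[x_\alpha,x_\beta]=C_{\alpha,\beta}x_{\alpha+\beta}$ ($C_{\alpha,\beta}=0$ if $\alpha+\beta\notin\Delta_+$), $\mathfrak n=\bigoplus_{\alpha\in\Delta_+}\mathbb Cx_\alpha$, $\bar{\mathfrak n}=\mathfrak n\otimes\mathbb C[t,t^{-1}]\subset\widehat{\mathfrak g}$, $x_\alpha(m)=x_\alpha\otimes t^m$, $\bar{\mathfrak n}_+=\mathfrak n\otimes\mathbb C[t]$, $\bar{\mathfrak n}_-=\mathfrak n\otimes t^{-1}\mathbb C[t^{-1}]$. Completion: let $M$ be the free monoid on $\mathbb Z\times\Delta_+$ (finite words $a=((m_1,\beta_1),\dots,(m_p,\beta_p))$, product = concatenation $\circ$). For $j\in\mathbb Z$ write $a\le j$ if $m_l+m_{l+1}+\cdots+m_p\le j$ for every $l$. Let $F$ be the set of functions $\mu:M\to\mathbb C$ such that $\{a\le j:\mu(a)\ne0\}$ is finite for every $j$; it is an algebra under $(\mu_1\mu_2)(a)=\sum_{a=b\circ c}\mu_1(b)\mu_2(c)$,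 containing the free algebra $F_0$ of finitely supported functions, generated by the indicator functions $X_\beta(m)$ of one-letter words; every $\mu\in F$ is written $\sum_a\mu(a)X(a)$ with $X(a)=X_{\beta_1}(m_1)\cdots X_{\beta_p}(m_p)$. Let $\widetilde I$ be the two-sided ideal of $F$ generated by $X_\alpha(m)X_\beta(l)-X_\beta(l)X_\alpha(m)-C_{\alpha,\beta}X_{\alpha+\beta}(m+l)$, and $\widetilde{U(\bar{\mathfrak n})}=F/\widetilde I$, with $[\mu]$ the class of $\mu$ and $\iota:U(\bar{\mathfrak n})\to\widetilde{U(\bar{\mathfrak n})}$ the homomorphism $x_\beta(m)\mapsto[X_\beta(m)]$; we write $x_\beta(m)$ for $[X_\beta(m)]$. Let $M_+$ be the set of words with $p\ge1$ such that $m_l+\cdots+m_p\ge0$ for some $l$, and $\widetilde{U(\bar{\mathfrak n})\bar{\mathfrak n}_+}=\{[\mu]:\mu\in F,\ \mu(a)=0\text{ for }a\notin M_+\}$. For a sequence $(m_1,\dots,m_{k+1})$ whose distinct values occur with multiplicities $n_1,\dots,n_j$, let $c_{m_1,\dots,m_{k+1}}=(k+1)!/(n_1!\cdots n_j!)$. For $t\in\mathbb Z$, $R^i_{-1,t}=\sum_{m_1+\cdots+m_{k+1}=-t,\ m_l\le-1}x_{\alpha_i}(m_1)\cdots x_{\alpha_i}(m_{k+1})\in U(\bar{\mathfrak n})$, and $\mathcal R^i_t=\iota(R^i_{-1,t})+\sum_{m_1\le\cdots\le m_{k+1},\ m_1+\cdots+m_{k+1}=-t,\ m_{k+1}\ge0}c_{m_1,\dots,m_{k+1}}x_{\alpha_i}(m_1)\cdots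 x_{\alpha_i}(m_{k+1})\in\widetilde{U(\bar{\mathfrak n})}$ (the class of the corresponding element of $F$). Finally $I_{k\Lambda_0}=\sum_{i=1}^n\sum_{t\ge k+1}U(\bar{\mathfrak n})R^i_{-1,t}+U(\bar{\mathfrak n})\bar{\mathfrak n}_+$, a left ideal of $U(\bar{\mathfrak n})$. *)

theory Defs
  imports Complex_Main "HOL-Library.Multiset"
begin

text \<open>Positive roots of sl(n+1): pairs (i,j) with 1 <= i < j <= n+1,
  standing for eps_i - eps_j, root vector E_ij.\<close>

type_synonym root = "nat \<times> nat"
type_synonym letter = "int \<times> root"
type_synonym word = "letter list"
type_synonym fn = "word \<Rightarrow> complex"

definition pos_root :: "nat \<Rightarrow> root \<Rightarrow> bool" where
  "pos_root n r \<longleftrightarrow> 1 \<le> fst r \<and> fst r < snd r \<and> snd r \<le> n + 1"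

definition simple_root :: "nat \<Rightarrow> root" where
  "simple_root i = (i, i + 1)"

text \<open>Structure constants for x_(i,j) = E_ij: [E_ij, E_jl] = E_il, [E_jl, E_ij] = - E_il.\<close>
definition Cst :: "root \<Rightarrow> root \<Rightarrow> complex" where
  "Cst a b = (if snd a = fst b then 1 else if snd b = fst a then -1 else 0)"

definition root_sum :: "root \<Rightarrow> root \<Rightarrow> root" where
  "root_sum a b = (if snd a = fst b then (fst a, snd b) else (fst b, snd a))"

definition word_le :: "word \<Rightarrow> int \<Rightarrow> bool" where
  "word_le a j \<longleftrightarrow> (\<forall>l < length a. sum_list (map fst (drop l a)) \<le> j)"

definition valid_word :: "nat \<Rightarrow> word \<Rightarrow> bool" where
  "valid_word n a \<longleftrightarrow> (\<forall>x \<in> set a. pos_root n (snd x))"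

text \<open>The completion F (functions on words over Z x Delta_+).\<close>
definition inF :: "nat \<Rightarrow> fn \<Rightarrow> bool" where
  "inF n \<mu> \<longleftrightarrow> (\<forall>a. \<mu> a \<noteq> 0 \<longrightarrow> valid_word n a) \<and>
                (\<forall>j. finite {a. word_le a j \<and> \<mu> a \<noteq> 0})"

text \<open>The free algebra F_0 (finitely supported functions).\<close>
definition inF0 :: "nat \<Rightarrow> fn \<Rightarrow> bool" where
  "inF0 n \<mu> \<longleftrightarrow> (\<forall>a. \<mu> a \<noteq> 0 \<longrightarrow> valid_word n a) \<and> finite {a. \<mu> a \<noteq> 0}"

definition fadd :: "fn \<Rightarrow> fn \<Rightarrow> fn" where
  "fadd f g = (\<lambda>a. f a + g a)"

definition fsub :: "fn \<Rightarrow> fn \<Rightarrow> fn" where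
  "fsub f g = (\<lambda>a. f a - g a)"

definition fscale :: "complex \<Rightarrow> fn \<Rightarrow> fn" where
  "fscale c f = (\<lambda>a. c * f a)"

definition fmul :: "fn \<Rightarrow> fn \<Rightarrow> fn" where
  "fmul f g = (\<lambda>a. \<Sum>l\<in>{0..length a}. f (take l a) * g (drop l a))"

definition Xg :: "root \<Rightarrow> int \<Rightarrow> fn" where
  "Xg b m = (\<lambda>a. if a = [(m, b)] then 1 else 0)"

definition rel :: "root \<Rightarrow> int \<Rightarrow> root \<Rightarrow> int \<Rightarrow> fn" where
  "rel a m b l = fsub (fsub (fmul (Xg a m) (Xg b l)) (fmul (Xg b l) (Xg a m)))
      (if Cst a b = 0 then (\<lambda>_. 0) else fscale (Cst a b) (Xg (root_sum a b) (m + l)))"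

definition rel_gens :: "nat \<Rightarrow> fn set" where
  "rel_gens n = {rel a m b l | a m b l. pos_root n a \<and> pos_root n b}"

inductive_set tildeI :: "nat \<Rightarrow> fn set" for n where
  zero: "(\<lambda>_. 0) \<in> tildeI n"
| gen: "g \<in> rel_gens n \<Longrightarrow> inF n \<mu> \<Longrightarrow> inF n \<nu> \<Longrightarrow> fmul (fmul \<mu> g) \<nu> \<in> tildeI n"
| add: "x \<in> tildeI n \<Longrightarrow> y \<in> tildeI n \<Longrightarrow> fadd x y \<in> tildeI n"

text \<open>Lift to F_0 of R^i_{-1,t}.\<close>
definition Rlift :: "nat \<Rightarrow> nat \<Rightarrow> int \<Rightarrow> fn" where
  "Rlift k i t = (\<lambda>a. if length a = k + 1 \<and> (\<forall>x\<in>set a. snd x = simple_root i)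
       \<and> (\<forall>x\<in>set a. fst x \<le> -1) \<and> sum_list (map fst a) = - t then 1 else 0)"

definition multinom :: "int list \<Rightarrow> nat" where
  "multinom ms = fact (length ms) div (\<Prod>v\<in>set ms. fact (count (mset ms) v))"

text \<open>Representative in F of the completed relation calR^i_t.\<close>
definition calR :: "nat \<Rightarrow> nat \<Rightarrow> int \<Rightarrow> fn" where
  "calR k i t = (\<lambda>a. if length a = k + 1 \<and> (\<forall>x\<in>set a. snd x = simple_root i)
       \<and> sum_list (map fst a) = - t
     then (if (\<forall>x\<in>set a. fst x \<le> -1) then 1
           else if sorted (map fst a) \<and> fst (last a) \<ge> 0
           then of_nat (multinom (map fst a)) else 0)
     else 0)"

text \<open>Generators of the left ideal I_{k Lambda_0} (lifted to F_0).\<close>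
definition Igens :: "nat \<Rightarrow> nat \<Rightarrow> fn set" where
  "Igens n k = {Rlift k i t | i t. 1 \<le> i \<and> i \<le> n \<and> t \<ge> int k + 1}
             \<union> {Xg b m | b m. pos_root n b \<and> m \<ge> 0}"

text \<open>Left ideal of F_0 generated by Igens; its image under iota is iota(I_{k Lambda_0}).\<close>
inductive_set Ilift :: "nat \<Rightarrow> nat \<Rightarrow> fn set" for n k where
  zero: "(\<lambda>_. 0) \<in> Ilift n k"
| gen: "g \<in> Igens n k \<Longrightarrow> inF0 n \<mu> \<Longrightarrow> fmul \<mu> g \<in> Ilift n k"
| add: "x \<in> Ilift n k \<Longrightarrow> y \<in> Ilift n k \<Longrightarrow> fadd x y \<in> Ilift n k"

definition in_Mplus :: "word \<Rightarrow> bool" where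
  "in_Mplus a \<longleftrightarrow> length a \<ge> 1 \<and> (\<exists>l < length a. sum_list (map fst (drop l a)) \<ge> 0)"

text \<open>Representatives in F_0 of elements of U(nbar_-).\<close>
definition inUneg :: "nat \<Rightarrow> fn \<Rightarrow> bool" where
  "inUneg n a \<longleftrightarrow> inF0 n a \<and> (\<forall>w. a w \<noteq> 0 \<longrightarrow> (\<forall>x\<in>set w. fst x \<le> -1))"

end

theory Submission
  imports Defs "HOL-Library.Function_Algebras" "HOL-Library.Product_Lexorder" "HOL-Combinatorics.Multiset_Permutations"
begin


definition Xw :: "word \<Rightarrow> fn" where "Xw w = (\<lambda>a. if a = w then 1 else 0)"

definition splits :: "word \<Rightarrow> (word \<times> word) set" where
  "splits w = {(u,v). u @ v = w}"

lemma splits_eq: "splits w = (\<lambda>l. (take l w, drop l w)) ` {0..length w}"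
proof -
  have "(u,v) \<in> (\<lambda>l. (take l w, drop l w)) ` {0..length w}" if "u @ v = w" for u v
    using that by (auto intro!: image_eqI[where x="length u"])
  then show ?thesis unfolding splits_def by auto
qed

lemma finite_splits[simp]: "finite (splits w)"
  by (simp add: splits_eq)

lemma fmul_splits: "fmul f g w = (\<Sum>(u,v)\<in>splits w. f u * g v)"
proof -
  have inj: "inj_on (\<lambda>l. (take l w, drop l w)) {0..length w}"
    by (rule inj_onI) (metis atLeastAtMost_iff length_take min.absorb2 prod.inject)
  show ?thesis unfolding fmul_def splits_eq
    by (simp add: sum.reindex[OF inj])
qed

lemma fmul_assoc: "fmul (fmul f g) h = fmul f (fmul g h)"
proof
  fix w
  have "fmul (fmul f g) h w = (\<Sum>pz\<in>splits w. \<Sum>xy\<in>splits (fst pz). f (fst xy) * g (snd xy) * h (snd pz))"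
    by (simp add: fmul_splits sum_distrib_right case_prod_beta)
  also have "\<dots> = (\<Sum>(pz,xy)\<in>Sigma (splits w) (\<lambda>pz. splits (fst pz)). f (fst xy) * g (snd xy) * h (snd pz))"
    by (rule sum.Sigma) auto
  also have "\<dots> = (\<Sum>(xq,yz)\<in>Sigma (splits w) (\<lambda>xq. splits (snd xq)). f (fst xq) * g (fst yz) * h (snd yz))"
    by (rule sum.reindex_bij_witness[where i="\<lambda>(xq,yz). ((fst xq @ fst yz, snd yz), (fst xq, fst yz))"
          and j="\<lambda>(pz,xy). ((fst xy, snd xy @ snd pz), (snd xy, snd pz))"])
       (auto simp: splits_def)
  also have "\<dots> = (\<Sum>xq\<in>splits w. \<Sum>yz\<in>splits (snd xq). f (fst xq) * g (fst yz) * h (snd yz))"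
    by (rule sum.Sigma[symmetric]) auto
  also have "\<dots> = fmul f (fmul g h) w"
    by (simp add: fmul_splits sum_distrib_left case_prod_beta mult.assoc)
  finally show "fmul (fmul f g) h w = fmul f (fmul g h) w" .
qed

lemma fmul_add_left: "fmul (f + g) h = fmul f h + fmul g h"
  by (rule ext) (simp add: fmul_def distrib_right sum.distrib)
lemma fmul_add_right: "fmul h (f + g) = fmul h f + fmul h g"
  by (rule ext) (simp add: fmul_def distrib_left sum.distrib)
lemma fmul_diff_left: "fmul (f - g) h = fmul f h - fmul g h"
  by (rule ext) (simp add: fmul_def left_diff_distrib sum_subtractf)
lemma fmul_diff_right: "fmul h (f - g) = fmul h f - fmul h g"
  by (rule ext) (simp add: fmul_def right_diff_distrib sum_subtractf)
lemma fmul_zero_left[simp]: "fmul 0 h = 0"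
  by (rule ext) (simp add: fmul_def)
lemma fmul_zero_right[simp]: "fmul h 0 = 0"
  by (rule ext) (simp add: fmul_def)
lemma fmul_scale_left: "fmul (fscale c f) h = fscale c (fmul f h)"
  by (rule ext) (simp add: fmul_def fscale_def sum_distrib_left mult.assoc)
lemma fmul_scale_right: "fmul h (fscale c f) = fscale c (fmul h f)"
  by (rule ext) (simp add: fmul_def fscale_def sum_distrib_left mult.left_commute)

lemma sum_fun_apply: "(\<Sum>x\<in>A. F x) w = (\<Sum>x\<in>A. F x w)"
  by (induction A rule: infinite_finite_induct) auto

lemma fmul_sum_left: "fmul (\<Sum>x\<in>A. F x) h = (\<Sum>x\<in>A. fmul (F x) h)"
proof (induction A rule: infinite_finite_induct)
  case (insert x A) then show ?case by (metis sum.insert fmul_add_left)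
next
  case (infinite A) then show ?case by (simp only: sum.infinite[OF infinite] fmul_zero_left)
qed (simp only: sum.empty fmul_zero_left)
lemma fmul_sum_right: "fmul h (\<Sum>x\<in>A. F x) = (\<Sum>x\<in>A. fmul h (F x))"
proof (induction A rule: infinite_finite_induct)
  case (insert x A) then show ?case by (metis sum.insert fmul_add_right)
next
  case (infinite A) then show ?case by (simp only: sum.infinite[OF infinite] fmul_zero_right)
qed (simp only: sum.empty fmul_zero_right)

lemma Xw_mult: "Xw u a * Xw v b = (if (a,b) = (u,v) then 1 else 0)"
  by (simp add: Xw_def)

lemma fmul_Xw: "fmul (Xw u) (Xw v) = Xw (u @ v)"
proof
  fix w
  have "fmul (Xw u) (Xw v) w = (\<Sum>p\<in>splits w. if p = (u,v) then 1 else 0)"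
    unfolding fmul_splits by (intro sum.cong refl) (auto simp: Xw_def split: if_split_asm)
  also have "\<dots> = (if (u,v) \<in> splits w then 1 else 0)"
    by (rule sum.delta[OF finite_splits])
  also have "\<dots> = Xw (u @ v) w"
    by (simp add: Xw_def splits_def eq_commute)
  finally show "fmul (Xw u) (Xw v) w = Xw (u @ v) w" .
qed

lemma fmul_Xnil_left[simp]: "fmul (Xw []) f = f"
proof
  fix w
  have "fmul (Xw []) f w = (\<Sum>p\<in>splits w. if p = ([],w) then f w else 0)"
    unfolding fmul_splits
  proof (intro sum.cong refl)
    fix p assume "p \<in> splits w"
    then obtain a b where "p = (a,b)" "a @ b = w" by (auto simp: splits_def)
    then show "(case p of (u, v) \<Rightarrow> Xw [] u * f v) = (if p = ([], w) then f w else 0)"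
      by (cases "a = []") (auto simp: Xw_def)
  qed
  also have "\<dots> = f w" by (subst sum.delta[OF finite_splits]) (simp add: splits_def)
  finally show "fmul (Xw []) f w = f w" .
qed

lemma fmul_Xnil_right[simp]: "fmul f (Xw []) = f"
proof
  fix w
  have "fmul f (Xw []) w = (\<Sum>p\<in>splits w. if p = (w,[]) then f w else 0)"
    unfolding fmul_splits
  proof (intro sum.cong refl)
    fix p assume "p \<in> splits w"
    then obtain a b where "p = (a,b)" "a @ b = w" by (auto simp: splits_def)
    then show "(case p of (u, v) \<Rightarrow> f u * Xw [] v) = (if p = (w, []) then f w else 0)"
      by (cases "b = []") (auto simp: Xw_def)
  qed
  also have "\<dots> = f w" by (subst sum.delta[OF finite_splits]) (simp add: splits_def)
  finally show "fmul f (Xw []) w = f w" .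
qed

lemma fsub_eq[simp]: "fsub f g = f - g" by (simp add: fsub_def fun_eq_iff)
lemma fadd_eq[simp]: "fadd f g = f + g" by (simp add: fadd_def fun_eq_iff)

lemma fmul_supp: "fmul f g w \<noteq> 0 \<Longrightarrow> \<exists>u v. w = u @ v \<and> f u \<noteq> 0 \<and> g v \<noteq> 0"
proof (rule ccontr)
  assume ne: "fmul f g w \<noteq> 0" and n: "\<not> (\<exists>u v. w = u @ v \<and> f u \<noteq> 0 \<and> g v \<noteq> 0)"
  have "\<forall>p\<in>splits w. (case p of (u,v) \<Rightarrow> f u * g v) = 0"
  proof
    fix p assume "p \<in> splits w"
    then obtain u v where "p = (u,v)" "w = u @ v" by (auto simp: splits_def)
    with n show "(case p of (u,v) \<Rightarrow> f u * g v) = 0" by auto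
  qed
  then have "fmul f g w = 0" unfolding fmul_splits by (rule sum.neutral)
  with ne show False by simp
qed

lemma finite_rep: assumes "finite S" "{w. f w \<noteq> 0} \<subseteq> S" shows "f = (\<Sum>w\<in>S. fscale (f w) (Xw w))"
proof
  fix a
  have "(\<Sum>w\<in>S. fscale (f w) (Xw w)) a = (\<Sum>w\<in>S. if a = w then f a else 0)"
    unfolding sum_fun_apply by (intro sum.cong refl) (simp add: fscale_def Xw_def)
  also have "\<dots> = (if a \<in> S then f a else 0)" by (rule sum.delta'[OF assms(1)])
  also have "\<dots> = f a" using assms(2) by auto
  finally show "f a = (\<Sum>w\<in>S. fscale (f w) (Xw w)) a" by simp
qed



lemma sum_drop_append_lt: "l < length u \<Longrightarrow> sum_list (map fst (drop l (u @ v))) = sum_list (map fst (drop l u)) + sum_list (map fst v)"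
  by simp

lemma word_le_append: assumes "word_le (u @ v) j"
  shows "word_le v j" "word_le u (j - sum_list (map fst v))"
proof -
  show "word_le v j" unfolding word_le_def
  proof (intro allI impI)
    fix l assume "l < length v"
    then have "length u + l < length (u @ v)" by simp
    with assms have "sum_list (map fst (drop (length u + l) (u @ v))) \<le> j" unfolding word_le_def by blast
    moreover have "drop (length u + l) (u @ v) = drop l v" by simp
    ultimately show "sum_list (map fst (drop l v)) \<le> j" by simp
  qed
  show "word_le u (j - sum_list (map fst v))" unfolding word_le_def
  proof (intro allI impI)
    fix l assume l: "l < length u"
    then have "l < length (u @ v)" by simp
    with assms have "sum_list (map fst (drop l (u @ v))) \<le> j" by (auto simp: word_le_def)
    with l show "sum_list (map fst (drop l u)) \<le> j - sum_list (map fst v)" by simp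
  qed
qed

lemma valid_append[simp]: "valid_word n (u @ v) \<longleftrightarrow> valid_word n u \<and> valid_word n v"
  by (auto simp: valid_word_def)
lemma valid_Cons[simp]: "valid_word n (x # v) \<longleftrightarrow> pos_root n (snd x) \<and> valid_word n v"
  by (auto simp: valid_word_def)
lemma valid_Nil[simp]: "valid_word n []"
  by (auto simp: valid_word_def)

lemma inF_fmul: assumes "inF n f" "inF n g" shows "inF n (fmul f g)"
  unfolding inF_def
proof (intro conjI allI impI)
  fix w assume "fmul f g w \<noteq> 0"
  then obtain u v where "w = u @ v" "f u \<noteq> 0" "g v \<noteq> 0" using fmul_supp by blast
  with assms show "valid_word n w" by (auto simp: inF_def)
next
  fix j
  let ?V = "{v. word_le v j \<and> g v \<noteq> 0}"
  have "{w. word_le w j \<and> fmul f g w \<noteq> 0} \<subseteq>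
        (\<lambda>(v,u). u @ v) ` Sigma ?V (\<lambda>v. {u. word_le u (j - sum_list (map fst v)) \<and> f u \<noteq> 0})"
  proof
    fix w assume "w \<in> {w. word_le w j \<and> fmul f g w \<noteq> 0}"
    then have w: "word_le w j" "fmul f g w \<noteq> 0" by auto
    then obtain u v where uv: "w = u @ v" "f u \<noteq> 0" "g v \<noteq> 0" using fmul_supp by blast
    with w word_le_append[of u v j] show "w \<in> (\<lambda>(v,u). u @ v) ` Sigma ?V (\<lambda>v. {u. word_le u (j - sum_list (map fst v)) \<and> f u \<noteq> 0})"
      by (auto intro!: image_eqI[where x="(v,u)"])
  qed
  moreover have "finite (Sigma ?V (\<lambda>v. {u. word_le u (j - sum_list (map fst v)) \<and> f u \<noteq> 0}))"
    using assms by (intro finite_SigmaI) (auto simp: inF_def)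
  ultimately show "finite {w. word_le w j \<and> fmul f g w \<noteq> 0}"
    by (meson finite_imageI finite_subset)
qed

lemma inF0_imp_inF: "inF0 n f \<Longrightarrow> inF n f"
  by (auto simp: inF0_def inF_def)

lemma inF0_fmul: assumes "inF0 n f" "inF0 n g" shows "inF0 n (fmul f g)"
  unfolding inF0_def
proof (intro conjI allI impI)
  fix w assume "fmul f g w \<noteq> 0"
  then obtain u v where "w = u @ v" "f u \<noteq> 0" "g v \<noteq> 0" using fmul_supp by blast
  with assms show "valid_word n w" by (auto simp: inF0_def)
next
  have "{w. fmul f g w \<noteq> 0} \<subseteq> (\<lambda>(u,v). u @ v) ` ({u. f u \<noteq> 0} \<times> {v. g v \<noteq> 0})"
    using fmul_supp by fastforce
  moreover have "finite ({u. f u \<noteq> 0} \<times> {v. g v \<noteq> 0})" using assms by (auto simp: inF0_def)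
  ultimately show "finite {w. fmul f g w \<noteq> 0}" by (meson finite_imageI finite_subset)
qed

lemma inF0_Xw: "valid_word n w \<Longrightarrow> inF0 n (Xw w)"
  by (auto simp: inF0_def Xw_def)
lemma inF_Xw: "valid_word n w \<Longrightarrow> inF n (Xw w)"
  by (simp add: inF0_Xw inF0_imp_inF)

lemma inF_mono: assumes "inF n f" "\<And>w. g w \<noteq> 0 \<Longrightarrow> f w \<noteq> 0" shows "inF n g"
  unfolding inF_def
proof (intro conjI allI impI)
  fix a assume "g a \<noteq> 0" then show "valid_word n a" using assms by (auto simp: inF_def)
next
  fix j
  have "{w. word_le w j \<and> g w \<noteq> 0} \<subseteq> {w. word_le w j \<and> f w \<noteq> 0}" using assms(2) by auto
  moreover have "finite {w. word_le w j \<and> f w \<noteq> 0}" using assms(1) by (auto simp: inF_def)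
  ultimately show "finite {w. word_le w j \<and> g w \<noteq> 0}" by (rule finite_subset)
qed

lemma inF_add: assumes "inF n f" "inF n g" shows "inF n (f + g)"
  unfolding inF_def
proof (intro conjI allI impI)
  fix a assume "(f + g) a \<noteq> 0" then show "valid_word n a" using assms by (cases "f a = 0") (auto simp: inF_def)
next
  fix j
  have "{w. word_le w j \<and> (f + g) w \<noteq> 0} \<subseteq> {w. word_le w j \<and> f w \<noteq> 0} \<union> {w. word_le w j \<and> g w \<noteq> 0}" by auto
  moreover have "finite ({w. word_le w j \<and> f w \<noteq> 0} \<union> {w. word_le w j \<and> g w \<noteq> 0})"
    using assms by (auto simp: inF_def)
  ultimately show "finite {w. word_le w j \<and> (f + g) w \<noteq> 0}" by (rule finite_subset)
qed
lemma inF_scale: "inF n f \<Longrightarrow> inF n (fscale c f)"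
  by (erule inF_mono) (auto simp: fscale_def)
lemma inF_zero: "inF n 0" by (auto simp: inF_def)
lemma fscale_m1: "fscale (-1) f = - f" by (auto simp: fscale_def)
lemma inF_neg: "inF n f \<Longrightarrow> inF n (- f)" using inF_scale[of n f "-1"] by (simp add: fscale_m1)
lemma inF_diff: "inF n f \<Longrightarrow> inF n g \<Longrightarrow> inF n (f - g)"
  using inF_add[of n f "- g"] inF_neg[of n g] by simp

lemma fscale_zero_fn[simp]: "fscale c 0 = 0" by (auto simp: fscale_def)
lemma fscale_add: "fscale c (f + g) = fscale c f + fscale c g" by (auto simp: fscale_def distrib_left)
lemma fscale_diff: "fscale c (f - g) = fscale c f - fscale c g" by (auto simp: fscale_def right_diff_distrib)
lemma fscale_sum: "fscale c (\<Sum>x\<in>A. F x) = (\<Sum>x\<in>A. fscale c (F x))"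
  by (auto simp: fscale_def sum_fun_apply sum_distrib_left)
lemma fscale_fscale: "fscale c (fscale d f) = fscale (c * d) f" by (auto simp: fscale_def)
lemma fscale_1[simp]: "fscale 1 f = f" by (auto simp: fscale_def)
lemma fscale_0[simp]: "fscale 0 f = 0" by (auto simp: fscale_def)

lemma plus_lam: "(\<lambda>a. x a + y a) = (x + y :: fn)" by (simp add: plus_fun_def)

lemma zero_fn_eq: "(\<lambda>_. 0::complex) = (0::fn)" by (simp add: zero_fun_def)

lemma tI_zero: "0 \<in> tildeI n" using tildeI.zero zero_fn_eq by metis
lemma tI_add: "x \<in> tildeI n \<Longrightarrow> y \<in> tildeI n \<Longrightarrow> x + y \<in> tildeI n"
  using tildeI.add by fastforce

lemma tI_scale: "x \<in> tildeI n \<Longrightarrow> fscale c x \<in> tildeI n"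
proof (induction rule: tildeI.induct)
  case zero then show ?case using tI_zero zero_fn_eq by simp
next
  case (gen g \<mu> \<nu>)
  have "fscale c (fmul (fmul \<mu> g) \<nu>) = fmul (fmul (fscale c \<mu>) g) \<nu>" by (simp add: fmul_scale_left)
  with gen show ?case by (metis inF_scale tildeI.gen)
next
  case (add x y) then show ?case by (simp add: plus_lam fscale_add tI_add)
qed

lemma tI_neg: "x \<in> tildeI n \<Longrightarrow> - x \<in> tildeI n" using tI_scale[of x n "-1"] by (simp add: fscale_m1)
lemma tI_diff: "x \<in> tildeI n \<Longrightarrow> y \<in> tildeI n \<Longrightarrow> x - y \<in> tildeI n"
  using tI_add[of x n "- y"] tI_neg by fastforce
lemma tI_sum: "(\<And>a. a \<in> A \<Longrightarrow> F a \<in> tildeI n) \<Longrightarrow> (\<Sum>a\<in>A. F a) \<in> tildeI n"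
  by (induction A rule: infinite_finite_induct) (auto simp: tI_zero tI_add)

lemma tI_lmul: "x \<in> tildeI n \<Longrightarrow> inF n \<phi> \<Longrightarrow> fmul \<phi> x \<in> tildeI n"
proof (induction rule: tildeI.induct)
  case zero then show ?case using tI_zero zero_fn_eq by simp
next
  case (gen g \<mu> \<nu>)
  have "fmul \<phi> (fmul (fmul \<mu> g) \<nu>) = fmul (fmul (fmul \<phi> \<mu>) g) \<nu>" by (simp add: fmul_assoc)
  with gen show ?case by (metis inF_fmul tildeI.gen)
next
  case (add x y) then show ?case by (simp add: plus_lam fmul_add_right tI_add)
qed

lemma tI_rmul: "x \<in> tildeI n \<Longrightarrow> inF n \<phi> \<Longrightarrow> fmul x \<phi> \<in> tildeI n"
proof (induction rule: tildeI.induct)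
  case zero then show ?case using tI_zero zero_fn_eq by simp
next
  case (gen g \<mu> \<nu>)
  have "fmul (fmul (fmul \<mu> g) \<nu>) \<phi> = fmul (fmul \<mu> g) (fmul \<nu> \<phi>)" by (simp add: fmul_assoc)
  with gen show ?case by (metis inF_fmul tildeI.gen)
next
  case (add x y) then show ?case by (simp add: plus_lam fmul_add_left tI_add)
qed

lemma Il_zero: "0 \<in> Ilift n k" using Ilift.zero zero_fn_eq by metis
lemma Il_add: "x \<in> Ilift n k \<Longrightarrow> y \<in> Ilift n k \<Longrightarrow> x + y \<in> Ilift n k"
  using Ilift.add by fastforce
lemma inF0_scale: "inF0 n f \<Longrightarrow> inF0 n (fscale c f)"
proof -
  assume "inF0 n f"
  moreover have "{w. fscale c f w \<noteq> 0} \<subseteq> {w. f w \<noteq> 0}" by (auto simp: fscale_def)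
  ultimately show ?thesis by (auto simp: inF0_def fscale_def intro: finite_subset)
qed
lemma Il_scale: "x \<in> Ilift n k \<Longrightarrow> fscale c x \<in> Ilift n k"
proof (induction rule: Ilift.induct)
  case zero then show ?case using Il_zero zero_fn_eq by simp
next
  case (gen g \<mu>)
  have "fscale c (fmul \<mu> g) = fmul (fscale c \<mu>) g" by (simp add: fmul_scale_left)
  with gen show ?case by (metis inF0_scale Ilift.gen)
next
  case (add x y) then show ?case by (simp add: plus_lam fscale_add Il_add)
qed
lemma Il_lmul: "x \<in> Ilift n k \<Longrightarrow> inF0 n \<phi> \<Longrightarrow> fmul \<phi> x \<in> Ilift n k"
proof (induction rule: Ilift.induct)
  case zero then show ?case using Il_zero zero_fn_eq by simp
next
  case (gen g \<mu>)
  have "fmul \<phi> (fmul \<mu> g) = fmul (fmul \<phi> \<mu>) g" by (simp add: fmul_assoc)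
  with gen show ?case by (metis inF0_fmul Ilift.gen)
next
  case (add x y) then show ?case by (simp add: plus_lam fmul_add_right Il_add)
qed
lemma Il_gen: "g \<in> Igens n k \<Longrightarrow> g \<in> Ilift n k"
  using Ilift.gen[of g n k "Xw []"] inF0_Xw[of n "[]"] by simp

definition MP :: "nat \<Rightarrow> fn \<Rightarrow> bool" where
  "MP n \<mu> \<longleftrightarrow> inF n \<mu> \<and> (\<forall>w. \<mu> w \<noteq> 0 \<longrightarrow> in_Mplus w)"

lemma MP_zero: "MP n 0" by (auto simp: MP_def inF_zero)
lemma MP_add: assumes "MP n f" "MP n g" shows "MP n (f + g)"
  unfolding MP_def
proof (intro conjI allI impI)
  show "inF n (f + g)" using assms by (simp add: MP_def inF_add)
  fix w assume "(f + g) w \<noteq> 0" then show "in_Mplus w" using assms by (cases "f w = 0") (auto simp: MP_def)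
qed
lemma MP_scale: "MP n f \<Longrightarrow> MP n (fscale c f)"
  unfolding MP_def using inF_scale by (auto simp: fscale_def)
lemma in_Mplus_append: assumes "in_Mplus v" shows "in_Mplus (u @ v)"
proof -
  obtain l where l: "l < length v" "sum_list (map fst (drop l v)) \<ge> 0" using assms by (auto simp: in_Mplus_def)
  have "length u + l < length (u @ v)" "drop (length u + l) (u @ v) = drop l v" using l by auto
  then show ?thesis unfolding in_Mplus_def using l by (intro conjI exI[of _ "length u + l"]) auto
qed
lemma MP_lmul: "MP n f \<Longrightarrow> inF n \<phi> \<Longrightarrow> MP n (fmul \<phi> f)"
  unfolding MP_def
  by (auto simp: inF_fmul dest!: fmul_supp intro: in_Mplus_append)

definition JF :: "nat \<Rightarrow> nat \<Rightarrow> fn \<Rightarrow> bool" where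
  "JF n k f \<longleftrightarrow> (\<exists>x\<in>Ilift n k. \<exists>y\<in>tildeI n. \<exists>\<mu>. MP n \<mu> \<and> f = x + y + \<mu>)"

lemma JF_intro: "x \<in> Ilift n k \<Longrightarrow> y \<in> tildeI n \<Longrightarrow> MP n \<mu> \<Longrightarrow> f = x + y + \<mu> \<Longrightarrow> JF n k f"
  unfolding JF_def by blast
lemma JF_tI: "y \<in> tildeI n \<Longrightarrow> JF n k y"
  by (rule JF_intro[OF Il_zero _ MP_zero]) simp_all
lemma JF_Il: "x \<in> Ilift n k \<Longrightarrow> JF n k x"
  by (rule JF_intro[OF _ tI_zero MP_zero]) simp_all
lemma JF_MP: "MP n \<mu> \<Longrightarrow> JF n k \<mu>"
  by (rule JF_intro[OF Il_zero tI_zero]) simp_all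
lemma JF_zero: "JF n k 0" by (rule JF_MP[OF MP_zero])
lemma JF_add: "JF n k f \<Longrightarrow> JF n k g \<Longrightarrow> JF n k (f + g)"
proof -
  assume "JF n k f" "JF n k g"
  then obtain x1 y1 m1 x2 y2 m2 where "x1 \<in> Ilift n k" "y1 \<in> tildeI n" "MP n m1" "f = x1 + y1 + m1"
     "x2 \<in> Ilift n k" "y2 \<in> tildeI n" "MP n m2" "g = x2 + y2 + m2" unfolding JF_def by blast
  moreover have "f + g = (x1 + x2) + (y1 + y2) + (m1 + m2)" using calculation by (simp add: algebra_simps)
  ultimately show ?thesis by (intro JF_intro[OF Il_add tI_add MP_add])
qed
lemma JF_scale: "JF n k f \<Longrightarrow> JF n k (fscale c f)"
proof -
  assume "JF n k f"
  then obtain x y m where "x \<in> Ilift n k" "y \<in> tildeI n" "MP n m" "f = x + y + m" unfolding JF_def by blast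
  moreover have "fscale c f = fscale c x + fscale c y + fscale c m" using calculation by (simp add: fscale_add)
  ultimately show ?thesis by (intro JF_intro[OF Il_scale tI_scale MP_scale])
qed
lemma JF_neg: "JF n k f \<Longrightarrow> JF n k (- f)" using JF_scale[of n k f "-1"] by (simp add: fscale_m1)
lemma JF_diff: "JF n k f \<Longrightarrow> JF n k g \<Longrightarrow> JF n k (f - g)"
  using JF_add[of n k f "- g"] JF_neg by fastforce
lemma JF_sum: "(\<And>a. a \<in> A \<Longrightarrow> JF n k (F a)) \<Longrightarrow> JF n k (\<Sum>a\<in>A. F a)"
  by (induction A rule: infinite_finite_induct) (auto simp: JF_zero JF_add)
lemma JF_lmul: "JF n k f \<Longrightarrow> inF0 n \<phi> \<Longrightarrow> JF n k (fmul \<phi> f)"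
proof -
  assume a: "JF n k f" "inF0 n \<phi>"
  then obtain x y m where "x \<in> Ilift n k" "y \<in> tildeI n" "MP n m" "f = x + y + m" unfolding JF_def by blast
  moreover have "fmul \<phi> f = fmul \<phi> x + fmul \<phi> y + fmul \<phi> m" using calculation by (simp add: fmul_add_right)
  ultimately show ?thesis using a(2) inF0_imp_inF
    by (intro JF_intro[OF Il_lmul tI_lmul MP_lmul]) auto
qed
lemma JF_tI_diff: "JF n k g \<Longrightarrow> f - g \<in> tildeI n \<Longrightarrow> JF n k f"
proof -
  assume "JF n k g" "f - g \<in> tildeI n"
  then have "JF n k ((f - g) + g)" by (intro JF_add[OF JF_tI])
  then show ?thesis by simp
qed



lemma Xg_eq: "Xg b m = Xw [(m,b)]" by (simp add: Xg_def Xw_def fun_eq_iff)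

lemma Xw_Cons: "Xw (x # v) = fmul (Xw [x]) (Xw v)" by (simp add: fmul_Xw)
lemma Xw_append: "Xw (u @ v) = fmul (Xw u) (Xw v)" by (simp add: fmul_Xw)

lemma rel_eq: "rel a m b l = Xw [(m,a),(l,b)] - Xw [(l,b),(m,a)] - fscale (Cst a b) (Xw [(m+l, root_sum a b)])"
  by (simp add: rel_def Xg_eq fmul_Xw zero_fn_eq)

lemma rel_in: "pos_root n a \<Longrightarrow> pos_root n b \<Longrightarrow> rel a m b l \<in> tildeI n"
proof -
  assume "pos_root n a" "pos_root n b"
  then have "rel a m b l \<in> rel_gens n" unfolding rel_gens_def by blast
  then have "fmul (fmul (Xw []) (rel a m b l)) (Xw []) \<in> tildeI n"
    using inF_Xw[of n "[]"] by (intro tildeI.gen) auto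
  then show ?thesis by simp
qed

lemma swap_rel:
  assumes "valid_word n u" "valid_word n v" "pos_root n a" "pos_root n b"
  shows "Xw (u @ (m,a) # (l,b) # v) - Xw (u @ (l,b) # (m,a) # v) - fscale (Cst a b) (Xw (u @ (m+l, root_sum a b) # v)) \<in> tildeI n"
proof -
  have "fmul (fmul (Xw u) (rel a m b l)) (Xw v) \<in> tildeI n"
    by (intro tI_rmul tI_lmul rel_in inF_Xw assms)
  moreover have "fmul (fmul (Xw u) (rel a m b l)) (Xw v) =
     Xw (u @ (m,a) # (l,b) # v) - Xw (u @ (l,b) # (m,a) # v) - fscale (Cst a b) (Xw (u @ (m+l, root_sum a b) # v))"
    by (simp add: rel_eq fmul_diff_left fmul_diff_right fmul_scale_left fmul_scale_right fmul_Xw)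
  ultimately show ?thesis by simp
qed

definition mrg :: "word \<Rightarrow> letter \<Rightarrow> nat \<Rightarrow> word" where
  "mrg b l p = b[p := (fst (b!p) + fst l, root_sum (snd (b!p)) (snd l))]"

definition commsum :: "word \<Rightarrow> letter \<Rightarrow> fn" where
  "commsum b l = (\<Sum>p<length b. fscale (Cst (snd (b!p)) (snd l)) (Xw (mrg b l p)))"

lemma commsum_Cons: "commsum (x # b) l = fscale (Cst (snd x) (snd l)) (Xw ((fst x + fst l, root_sum (snd x) (snd l)) # b))
   + fmul (Xw [x]) (commsum b l)"
proof -
  have "commsum (x # b) l = fscale (Cst (snd x) (snd l)) (Xw (mrg (x#b) l 0)) + (\<Sum>q<length b. fscale (Cst (snd ((x#b)!Suc q)) (snd l)) (Xw (mrg (x#b) l (Suc q))))"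
    unfolding commsum_def by (simp add: sum.lessThan_Suc_shift del: sum.lessThan_Suc)
  also have "(\<Sum>q<length b. fscale (Cst (snd ((x#b)!Suc q)) (snd l)) (Xw (mrg (x#b) l (Suc q)))) = fmul (Xw [x]) (commsum b l)"
    unfolding commsum_def by (simp add: fmul_sum_right fmul_scale_right fmul_Xw mrg_def)
  moreover have "mrg (x#b) l 0 = (fst x + fst l, root_sum (snd x) (snd l)) # b" by (simp add: mrg_def)
  ultimately show ?thesis by (simp only: nth_Cons_0)
qed

lemma comm_lemma:
  assumes "valid_word n b" "pos_root n (snd l)"
  shows "Xw (b @ [l]) - Xw (l # b) - commsum b l \<in> tildeI n"
  using assms(1)
proof (induction b)
  case Nil then show ?case by (simp add: commsum_def tI_zero tildeI.zero)
next
  case (Cons x b)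
  have IH: "Xw (b @ [l]) - Xw (l # b) - commsum b l \<in> tildeI n" using Cons.prems by (intro Cons.IH) auto
  have sw: "Xw ([] @ (fst x, snd x) # (fst l, snd l) # b) - Xw ([] @ (fst l, snd l) # (fst x, snd x) # b)
      - fscale (Cst (snd x) (snd l)) (Xw ([] @ (fst x + fst l, root_sum (snd x) (snd l)) # b)) \<in> tildeI n"
    using Cons.prems assms(2) by (intro swap_rel) auto
  have eq: "Xw ((x # b) @ [l]) - Xw (l # x # b) - commsum (x # b) l =
     fmul (Xw [x]) (Xw (b @ [l]) - Xw (l # b) - commsum b l) +
     (Xw ([] @ (fst x, snd x) # (fst l, snd l) # b) - Xw ([] @ (fst l, snd l) # (fst x, snd x) # b)
      - fscale (Cst (snd x) (snd l)) (Xw ([] @ (fst x + fst l, root_sum (snd x) (snd l)) # b)))"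
    by (simp add: commsum_Cons fmul_diff_right fmul_Xw)
  have "fmul (Xw [x]) (Xw (b @ [l]) - Xw (l # b) - commsum b l) \<in> tildeI n"
    using IH Cons.prems by (intro tI_lmul inF_Xw) auto
  then show ?case unfolding eq using sw by (rule tI_add)
qed

definition commR :: "nat \<Rightarrow> root set \<Rightarrow> bool" where
  "commR n R \<longleftrightarrow> (\<forall>a\<in>R. pos_root n a) \<and> (\<forall>a\<in>R. \<forall>b\<in>R. Cst a b = 0)"

lemma swap_comm:
  assumes "commR n R" "snd p \<in> R" "snd q \<in> R" "valid_word n u" "valid_word n v"
  shows "Xw (u @ p # q # v) - Xw (u @ q # p # v) \<in> tildeI n"
  using swap_rel[of n u v "snd p" "snd q" "fst p" "fst q"] assms by (auto simp: commR_def)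

lemma valid_of_R: "commR n R \<Longrightarrow> \<forall>x\<in>set w. snd x \<in> R \<Longrightarrow> valid_word n w"
  by (auto simp: commR_def valid_word_def)

lemma insort_comm:
  assumes "commR n R" "snd x \<in> R" "\<forall>y\<in>set ys. snd y \<in> R"
  shows "Xw (x # ys) - Xw (insort x ys) \<in> tildeI n"
  using assms(3)
proof (induction ys)
  case Nil then show ?case by (simp add: tI_zero tildeI.zero)
next
  case (Cons y ys)
  show ?case
  proof (cases "x \<le> y")
    case True then show ?thesis by (simp add: tI_zero tildeI.zero)
  next
    case False
    have IH: "Xw (x # ys) - Xw (insort x ys) \<in> tildeI n" using Cons.prems by (intro Cons.IH) auto
    have vys: "valid_word n ys" using Cons.prems assms(1) by (intro valid_of_R) auto
    have s: "Xw ([] @ x # y # ys) - Xw ([] @ y # x # ys) \<in> tildeI n"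
      using Cons.prems assms vys by (intro swap_comm[of n R]) auto
    have m: "fmul (Xw [y]) (Xw (x # ys) - Xw (insort x ys)) \<in> tildeI n"
      using IH Cons.prems assms(1) by (intro tI_lmul inF_Xw) (auto simp: commR_def)
    have eq: "Xw (x # y # ys) - Xw (insort x (y # ys)) = (Xw ([] @ x # y # ys) - Xw ([] @ y # x # ys)) + fmul (Xw [y]) (Xw (x # ys) - Xw (insort x ys))"
      using False by (simp add: fmul_diff_right fmul_Xw)
    show ?thesis unfolding eq using s m by (rule tI_add)
  qed
qed

lemma sort_comm:
  assumes "commR n R" "\<forall>y\<in>set w. snd y \<in> R"
  shows "Xw w - Xw (sort w) \<in> tildeI n"
  using assms(2)
proof (induction w)
  case Nil then show ?case by (simp add: tI_zero tildeI.zero)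
next
  case (Cons x xs)
  have IH: "Xw xs - Xw (sort xs) \<in> tildeI n" using Cons.prems by (intro Cons.IH) auto
  have m: "fmul (Xw [x]) (Xw xs - Xw (sort xs)) \<in> tildeI n"
    using IH Cons.prems assms(1) by (intro tI_lmul inF_Xw) (auto simp: commR_def)
  have i: "Xw (x # sort xs) - Xw (insort x (sort xs)) \<in> tildeI n"
    using Cons.prems by (intro insort_comm[OF assms(1)]) auto
  have eq: "Xw (x # xs) - Xw (sort (x # xs)) = fmul (Xw [x]) (Xw xs - Xw (sort xs)) + (Xw (x # sort xs) - Xw (insort x (sort xs)))"
    by (simp add: fmul_diff_right fmul_Xw)
  show ?case unfolding eq using m i by (rule tI_add)
qed



lemma sorted_le_last: "sorted u \<Longrightarrow> x \<in> set u \<Longrightarrow> x \<le> last u"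
proof (induction u rule: rev_induct)
  case (snoc y ys) then show ?case by (auto simp: sorted_append)
qed simp

lemma le_prod_fst: "(x::'a::linorder \<times> 'b::linorder) \<le> y \<Longrightarrow> fst x \<le> fst y"
  by (auto simp: less_eq_prod_def)

lemma in_Mplus_big: assumes "sorted u" "x \<in> set u" "fst x + sum_list (map fst c) \<ge> 0"
  shows "in_Mplus (u @ c)"
proof -
  have ne: "u \<noteq> []" using assms(2) by auto
  have "fst x \<le> fst (last u)" using le_prod_fst sorted_le_last assms(1,2) by blast
  have u: "u = butlast u @ [last u]" using ne by simp
  have "drop (length u - 1) (u @ c) = last u # c"
    by (subst u, subst (2) u) simp
  moreover have "length u - 1 < length (u @ c)" using ne by (cases u) auto
  ultimately show ?thesis unfolding in_Mplus_def
    using \<open>fst x \<le> fst (last u)\<close> assms(3) ne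
    by (intro conjI exI[of _ "length u - 1"]) auto
qed

lemma fscale_sum_scalar: "(\<Sum>x\<in>A. fscale (c x) F) = fscale (\<Sum>x\<in>A. c x) F"
  by (rule ext) (simp add: sum_fun_apply fscale_def sum_distrib_right)

lemma SymC:
  assumes R: "commR n R" and fin: "finite {w. f w \<noteq> 0}"
    and sup: "\<And>w x. f w \<noteq> 0 \<Longrightarrow> x \<in> set w \<Longrightarrow> snd x \<in> R"
    and cv: "valid_word n c"
    and coef: "\<And>u. sorted u \<Longrightarrow> (\<forall>x\<in>set u. fst x < N) \<Longrightarrow> (\<Sum>w\<in>{w. f w \<noteq> 0 \<and> sort w = u}. f w) = 0"
    and Nc: "N + sum_list (map fst c) \<ge> 0"
  shows "JF n k (fmul f (Xw c))"
proof -
  define S where "S = {w. f w \<noteq> 0}"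
  have fS: "finite S" using fin by (simp add: S_def)
  have frep: "f = (\<Sum>w\<in>S. fscale (f w) (Xw w))" using finite_rep[OF fS] by (simp add: S_def)
  define g where "g = (\<Sum>w\<in>S. fscale (f w) (Xw (sort w)))"
  have "f - g = (\<Sum>w\<in>S. fscale (f w) (Xw w - Xw (sort w)))"
    by (subst frep) (simp add: g_def fscale_diff sum_subtractf)
  moreover have "(\<Sum>w\<in>S. fscale (f w) (Xw w - Xw (sort w))) \<in> tildeI n"
    using sup by (intro tI_sum tI_scale sort_comm[OF R]) (auto simp: S_def)
  ultimately have t1: "fmul (f - g) (Xw c) \<in> tildeI n"
    using inF_Xw[OF cv] by (simp add: tI_rmul)
  define cf where "cf u = (\<Sum>w\<in>{x\<in>S. sort x = u}. f w)" for u
  have "g = (\<Sum>u\<in>sort ` S. \<Sum>w\<in>{x\<in>S. sort x = u}. fscale (f w) (Xw (sort w)))"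
    unfolding g_def by (rule sum.image_gen[OF fS])
  also have "\<dots> = (\<Sum>u\<in>sort ` S. fscale (cf u) (Xw u))"
    unfolding cf_def by (intro sum.cong refl) (simp add: fscale_sum_scalar[symmetric])
  finally have geq: "g = (\<Sum>u\<in>sort ` S. fscale (cf u) (Xw u))" .
  have "JF n k (fscale (cf u) (Xw (u @ c)))" if u: "u \<in> sort ` S" for u
  proof (cases "cf u = 0")
    case True then show ?thesis by (simp add: JF_zero)
  next
    case False
    obtain w where w: "w \<in> S" "u = sort w" using u by auto
    have su: "sorted u" using w by simp
    have setu: "set u = set w" using w by simp
    have "{x\<in>S. sort x = u} = {w. f w \<noteq> 0 \<and> sort w = u}" by (auto simp: S_def)
    then have "\<not> (\<forall>x\<in>set u. fst x < N)" using coef[OF su] False by (auto simp: cf_def)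
    then obtain x where x: "x \<in> set u" "fst x \<ge> N" by auto
    have "in_Mplus (u @ c)" using in_Mplus_big[OF su x(1)] x(2) Nc by simp
    moreover have "valid_word n (u @ c)" using cv sup w setu valid_of_R[OF R, of u]
      by (auto simp: S_def)
    ultimately have "MP n (Xw (u @ c))" unfolding MP_def using inF_Xw by (auto simp: Xw_def split: if_split_asm)
    then show ?thesis by (intro JF_MP MP_scale)
  qed
  then have t2: "JF n k (fmul g (Xw c))"
    unfolding geq by (simp add: fmul_sum_left fmul_scale_left fmul_Xw JF_sum)
  have "fmul f (Xw c) = fmul (f - g) (Xw c) + fmul g (Xw c)" by (simp add: fmul_diff_left)
  then show ?thesis using JF_add[OF JF_tI[OF t1] t2] by simp
qed



lemma if10_neq[simp]: "(if P then (1::complex) else 0) \<noteq> 0 \<longleftrightarrow> P" by simp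
lemma if10_eq[simp]: "(if P then (1::complex) else 0) = 0 \<longleftrightarrow> \<not> P" by simp

lemma Rlift_nz: "Rlift k i t w \<noteq> 0 \<longleftrightarrow> (length w = k + 1 \<and> (\<forall>x\<in>set w. snd x = simple_root i)
       \<and> (\<forall>x\<in>set w. fst x \<le> -1) \<and> sum_list (map fst w) = - t)" by (simp add: Rlift_def)

lemma sum_list_le_len: "(\<forall>x\<in>set xs. x \<le> B) \<Longrightarrow> sum_list xs \<le> int (length xs) * (B::int)"
  by (induction xs) (auto simp: algebra_simps)

lemma sum_list_remove1': "x \<in> set xs \<Longrightarrow> sum_list xs = x + sum_list (remove1 x (xs::int list))"
  by (induction xs) auto

lemma mode_lower:
  assumes "length xs = k + 1" "\<forall>y\<in>set xs. y \<le> B" "sum_list xs = T" "x \<in> set xs"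
  shows "x \<ge> T - int k * (B::int)"
proof -
  have "sum_list (remove1 x xs) \<le> int (length (remove1 x xs)) * B"
    using assms(2) set_remove1_subset[of x xs] by (intro sum_list_le_len) blast
  moreover have "length (remove1 x xs) = k" using assms(1,4) by (simp add: length_remove1)
  ultimately show ?thesis using sum_list_remove1'[OF assms(4)] assms(3) by simp
qed

lemma finite_words: "finite {w::word. length w = L \<and> (\<forall>x\<in>set w. snd x = r \<and> lo \<le> fst x \<and> fst x \<le> hi)}"
proof -
  have "{w::word. length w = L \<and> (\<forall>x\<in>set w. snd x = r \<and> lo \<le> fst x \<and> fst x \<le> hi)} \<subseteq> {xs. set xs \<subseteq> {lo..hi} \<times> {r} \<and> length xs = L}"
    by auto
  moreover have "finite {xs. set xs \<subseteq> {lo..hi} \<times> {r} \<and> length xs = L}"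
    by (rule finite_lists_length_eq) simp
  ultimately show ?thesis by (rule finite_subset)
qed

definition SW :: "nat \<Rightarrow> nat \<Rightarrow> int \<Rightarrow> int \<Rightarrow> word set" where
  "SW k i D t = {w. length w = k + 1 \<and> (\<forall>x\<in>set w. snd x = simple_root i \<and> -D \<le> fst x \<and> fst x \<le> D) \<and> sum_list (map fst w) = -t}"

definition Sfn :: "nat \<Rightarrow> nat \<Rightarrow> int \<Rightarrow> int \<Rightarrow> fn" where
  "Sfn k i D t = (\<lambda>w. if w \<in> SW k i D t then 1 else 0)"

lemma finite_SW: "finite (SW k i D t)"
  unfolding SW_def by (rule finite_subset[OF _ finite_words[of "k+1" "simple_root i" "-D" D]]) auto

lemma Sfn_rep: "Sfn k i D t = (\<Sum>b\<in>SW k i D t. Xw b)"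
proof -
  have "Sfn k i D t = (\<Sum>b\<in>SW k i D t. fscale (Sfn k i D t b) (Xw b))"
    by (rule finite_rep[OF finite_SW]) (simp add: Sfn_def subset_iff)
  also have "\<dots> = (\<Sum>b\<in>SW k i D t. Xw b)"
    by (intro sum.cong refl) (simp add: Sfn_def)
  finally show ?thesis .
qed

lemma pos_alpha: "1 \<le> i \<Longrightarrow> i \<le> n \<Longrightarrow> pos_root n (simple_root i)"
  by (simp add: pos_root_def simple_root_def)

lemma Cst_aa: "Cst (simple_root i) (simple_root i) = 0"
  by (simp add: Cst_def simple_root_def)

lemma commR_alpha: "1 \<le> i \<Longrightarrow> i \<le> n \<Longrightarrow> commR n {simple_root i}"
  by (simp add: commR_def pos_alpha Cst_aa)

lemma SW_valid: "1 \<le> i \<Longrightarrow> i \<le> n \<Longrightarrow> w \<in> SW k i D t \<Longrightarrow> valid_word n w"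
  by (auto simp: SW_def valid_word_def pos_alpha)

lemma inF0_Sfn: assumes "1 \<le> i" "i \<le> n" shows "inF0 n (Sfn k i D t)"
  unfolding inF0_def
proof (intro conjI allI impI)
  fix a assume "Sfn k i D t a \<noteq> 0"
  then have "a \<in> SW k i D t" by (simp add: Sfn_def)
  then show "valid_word n a" using SW_valid[OF assms] by blast
next
  have "{w. Sfn k i D t w \<noteq> 0} = SW k i D t" by (simp add: Sfn_def)
  then show "finite {w. Sfn k i D t w \<noteq> 0}" using finite_SW by simp
qed

lemma sum_neg_bound: "(\<forall>x\<in>set xs. x \<le> -1) \<Longrightarrow> sum_list xs \<le> - int (length (xs::int list))"
  by (induction xs) auto

lemma base_case:
  assumes i: "1 \<le> i" "i \<le> n" and D: "D \<ge> \<bar>t\<bar>"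
  shows "JF n k (Sfn k i D t)"
proof -
  let ?a = "simple_root i"
  define f where "f = Sfn k i D t - Rlift k i t"
  have RJ: "JF n k (Rlift k i t)"
  proof (cases "t \<ge> int k + 1")
    case True
    then have "Rlift k i t \<in> Igens n k" using i unfolding Igens_def by blast
    then show ?thesis by (intro JF_Il Il_gen)
  next
    case False
    have "Rlift k i t = 0"
    proof
      fix w
      show "Rlift k i t w = 0 w"
      proof (rule ccontr)
        assume "Rlift k i t w \<noteq> 0 w"
        then have "Rlift k i t w \<noteq> 0" by simp
        then have "length w = k + 1" "\<forall>x\<in>set w. fst x \<le> -1" "sum_list (map fst w) = - t"
          using Rlift_nz[of k i t w] by blast+
        then have "sum_list (map fst w) \<le> - int (length (map fst w))" by (intro sum_neg_bound) auto
        with \<open>length w = k + 1\<close> \<open>sum_list (map fst w) = - t\<close> False show False by simp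
      qed
    qed
    then show ?thesis by (simp add: JF_zero)
  qed
  have RinS: "Rlift k i t w \<noteq> 0 \<Longrightarrow> w \<in> SW k i D t" for w
  proof -
    assume "Rlift k i t w \<noteq> 0"
    then have w: "length w = k + 1" "\<forall>x\<in>set w. snd x = ?a" "\<forall>x\<in>set w. fst x \<le> -1" "sum_list (map fst w) = - t"
      using Rlift_nz[of k i t w] by blast+
    have lo: "fst x \<ge> -t - int k * (-1)" if "x \<in> set w" for x
      by (rule mode_lower[of "map fst w" k "-1" "-t" "fst x"]) (use w that in auto)
    have "-D \<le> fst x \<and> fst x \<le> D" if "x \<in> set w" for x
    proof -
      have a: "fst x \<le> -1" using w(3) that by blast
      have b: "fst x \<ge> -t + int k" using lo[OF that] by simp
      show ?thesis using a b D abs_ge_self[of t] abs_ge_minus_self[of t] by linarith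
    qed
    with w show "w \<in> SW k i D t" unfolding SW_def by blast
  qed
  have fsup: "{w. f w \<noteq> 0} \<subseteq> SW k i D t" using RinS by (auto simp: f_def Sfn_def)
  have fJ: "JF n k (fmul f (Xw []))"
  proof (rule SymC[OF commR_alpha[OF i], where N=0])
    show "finite {w. f w \<noteq> 0}" using fsup finite_SW by (rule finite_subset)
    show "\<And>w x. f w \<noteq> 0 \<Longrightarrow> x \<in> set w \<Longrightarrow> snd x \<in> {?a}" using fsup by (auto simp: SW_def)
    show "valid_word n []" by simp
    show "0 + sum_list (map fst []) \<ge> (0::int)" by simp
    fix u :: word assume su: "sorted u" and small: "\<forall>x\<in>set u. fst x < 0"
    have "{w. f w \<noteq> 0 \<and> sort w = u} = {}"
    proof (rule ccontr)
      assume "{w. f w \<noteq> 0 \<and> sort w = u} \<noteq> {}"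
      then obtain w where w: "f w \<noteq> 0" "sort w = u" by auto
      then have sw: "set w = set u" by (metis set_sort)
      have "w \<in> SW k i D t" using w fsup by auto
      then have "Rlift k i t w = 1" using sw small by (auto simp: SW_def Rlift_def)
      then have "f w = 0" using \<open>w \<in> SW k i D t\<close> by (simp add: f_def Sfn_def)
      with w show False by simp
    qed
    then show "(\<Sum>w\<in>{w. f w \<noteq> 0 \<and> sort w = u}. f w) = 0" by (simp only: sum.empty)
  qed
  have "Sfn k i D t = f + Rlift k i t" by (simp add: f_def)
  then show ?thesis using JF_add[OF _ RJ] fJ by simp
qed



lemma root_sum_pos: "pos_root n a \<Longrightarrow> pos_root n b \<Longrightarrow> Cst a b \<noteq> 0 \<Longrightarrow> pos_root n (root_sum a b)"
  by (auto simp: pos_root_def Cst_def root_sum_def split: if_split_asm)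

lemma gamma_facts:
  assumes "1 \<le> i" "i \<le> n" "pos_root n \<beta>" "Cst (simple_root i) \<beta> \<noteq> 0"
  shows "commR n {simple_root i, root_sum (simple_root i) \<beta>}"
proof -
  obtain b1 b2 where b: "\<beta> = (b1, b2)" by fastforce
  have pb: "1 \<le> b1" "b1 < b2" "b2 \<le> n + 1" using assms(3) b by (auto simp: pos_root_def)
  have c: "i + 1 = b1 \<or> b2 = i" using assms(4) b by (auto simp: Cst_def simple_root_def split: if_split_asm)
  have pg: "pos_root n (root_sum (simple_root i) \<beta>)"
    using root_sum_pos[OF pos_alpha[OF assms(1,2)] assms(3,4)] .
  show ?thesis
    using c pb b pg pos_alpha[OF assms(1,2)]
    by (auto simp: commR_def Cst_def root_sum_def simple_root_def pos_root_def)
qed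

definition Q :: "nat \<Rightarrow> nat \<Rightarrow> int \<Rightarrow> int \<Rightarrow> letter \<Rightarrow> fn" where
  "Q k i D t l = (\<Sum>b\<in>SW k i D t. \<Sum>p<k+1. Xw (mrg b l p))"

lemma commsum_SW: "b \<in> SW k i D t \<Longrightarrow> commsum b l = fscale (Cst (simple_root i) (snd l)) (\<Sum>p<k+1. Xw (mrg b l p))"
  unfolding commsum_def fscale_sum
  by (intro sum.cong) (auto simp: SW_def)

lemma comm_S:
  assumes "1 \<le> i" "i \<le> n" "pos_root n (snd l)"
  shows "fmul (Sfn k i D t) (Xw [l]) - fmul (Xw [l]) (Sfn k i D t) - fscale (Cst (simple_root i) (snd l)) (Q k i D t l) \<in> tildeI n"
proof -
  have "fmul (Sfn k i D t) (Xw [l]) - fmul (Xw [l]) (Sfn k i D t) - fscale (Cst (simple_root i) (snd l)) (Q k i D t l)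
      = (\<Sum>b\<in>SW k i D t. Xw (b @ [l]) - Xw (l # b) - commsum b l)"
    unfolding Sfn_rep Q_def fmul_sum_left fmul_sum_right fscale_sum sum_subtractf
    by (simp add: fmul_Xw commsum_SW fscale_sum del: sum.lessThan_Suc cong: sum.cong)
  moreover have "(\<Sum>b\<in>SW k i D t. Xw (b @ [l]) - Xw (l # b) - commsum b l) \<in> tildeI n"
    using SW_valid[OF assms(1,2)] assms(3) by (intro tI_sum comm_lemma) auto
  ultimately show ?thesis by simp
qed

definition PS :: "nat \<Rightarrow> nat \<Rightarrow> int \<Rightarrow> int \<Rightarrow> letter \<Rightarrow> word \<Rightarrow> (word \<times> nat) set" where
  "PS k i D t l w = {q. q \<in> SW k i D t \<times> {..<k+1} \<and> mrg (fst q) l (snd q) = w}"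

lemma Q_card: "Q k i D t l w = of_nat (card (PS k i D t l w))"
proof -
  have "Q k i D t l w = (\<Sum>q\<in>SW k i D t \<times> {..<k+1}. if mrg (fst q) l (snd q) = w then 1 else 0)"
    unfolding Q_def sum_fun_apply sum.cartesian_product by (simp add: Xw_def eq_commute case_prod_beta)
  also have "\<dots> = of_nat (card (PS k i D t l w))"
    unfolding PS_def by (simp add: sum.If_cases finite_SW Int_def)
  finally show ?thesis .
qed



lemma small_bounds:
  assumes "length w = k + 1" "\<forall>x\<in>set w. fst x < N" "sum_list (map fst w) = T" "x \<in> set w"
  shows "T - int k * N \<le> fst x"
proof -
  have "\<forall>y\<in>set (map fst w). y \<le> N" using assms(2) by auto
  then show ?thesis using mode_lower[of "map fst w" k N T "fst x"] assms by auto
qed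

lemma sum_fst_update: "p < length (b::word) \<Longrightarrow> sum_list (map fst (b[p := x])) = sum_list (map fst b) + fst x - fst (b ! p)"
  by (induction b arbitrary: p) (auto split: nat.split)

lemma kN_bound: "int k * N \<le> int k * \<bar>N\<bar>" "- (int k * \<bar>N\<bar>) \<le> int k * (N::int)"
proof -
  show "int k * N \<le> int k * \<bar>N\<bar>" by (rule mult_left_mono) auto
  have "int k * (- N) \<le> int k * \<bar>N\<bar>" by (rule mult_left_mono) auto
  then show "- (int k * \<bar>N\<bar>) \<le> int k * (N::int)" by simp
qed

lemma mrg_upd: "p < length w \<Longrightarrow> mrg (w[p := (y, a)]) (m', \<beta>) p = w[p := (y + m', root_sum a \<beta>)]"
  by (simp add: mrg_def)

lemma PS_card_eq:
  assumes small: "\<forall>x\<in>set w. fst x < N"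
    and D: "D \<ge> \<bar>t\<bar> + 2 * \<bar>m\<bar> + (int k + 1) * \<bar>N\<bar>"
  shows "card (PS k i D t (m, \<beta>) w) = card (PS k i D (t - m) (0, \<beta>) w)"
proof -
  let ?a = "simple_root i"
  let ?f = "\<lambda>q::word \<times> nat. ((fst q)[snd q := (fst (fst q ! snd q) + m, ?a)], snd q)"
  let ?g = "\<lambda>q::word \<times> nat. ((fst q)[snd q := (fst (fst q ! snd q) - m, ?a)], snd q)"
  have kb: "int k * N \<le> int k * \<bar>N\<bar>" "- (int k * \<bar>N\<bar>) \<le> int k * N" using kN_bound by auto
  have Nb: "N \<le> \<bar>N\<bar>" "\<bar>N\<bar> \<ge> 0" by auto
  have common: "length w = k + 1 \<and> sum_list (map fst w) = -t + m \<and> p < k + 1 \<and> fst (w!p) = fst (b!p) + m'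
       \<and> b = w[p := (fst (w!p) - m', ?a)] \<and> snd (w ! p) = root_sum ?a \<beta>"
    if q: "b \<in> SW k i D t'" "p < k + 1" "mrg b (m', \<beta>) p = w" "t' - m' = t - m" for b p t' m'
  proof -
    have lb: "length b = k + 1" using q(1) by (simp add: SW_def)
    have sb: "sum_list (map fst b) = - t'" using q(1) by (simp add: SW_def)
    have bp: "snd (b ! p) = ?a" using q(1,2) lb by (auto simp: SW_def)
    have w: "w = b[p := (fst (b!p) + m', root_sum ?a \<beta>)]" using q(3) bp by (simp add: mrg_def)
    have wp: "w ! p = (fst (b!p) + m', root_sum ?a \<beta>)" using w q(2) lb by simp
    have sw: "sum_list (map fst w) = -t' + m'" using w sum_fst_update[of p b] q(2) lb sb by simp
    have lw: "length w = k + 1" using w lb by simp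
    have "w[p := (fst (w!p) - m', ?a)] = b[p := (fst (b!p), ?a)]" using w wp by simp
    also have "\<dots> = b" using bp by (metis list_update_id prod.collapse)
    finally have bw: "b = w[p := (fst (w!p) - m', ?a)]" by simp
    show ?thesis
    proof (intro conjI)
      show "length w = k + 1" by (rule lw)
      show "sum_list (map fst w) = -t + m" using sw q(4) by simp
      show "p < k + 1" by (rule q(2))
      show "fst (w!p) = fst (b!p) + m'" using wp by simp
      show "b = w[p := (fst (w!p) - m', ?a)]" by (rule bw)
      show "snd (w ! p) = root_sum ?a \<beta>" using wp by simp
    qed
  qed
  have bnds: "-D \<le> fst (w!p) - m' \<and> fst (w!p) - m' \<le> D"
    if "length w = k + 1" "sum_list (map fst w) = -t + m" "p < k + 1" "m' = 0 \<or> m' = m" for p m'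
  proof -
    have "-t + m - int k * N \<le> fst (w!p)" using small_bounds[of w k N "-t+m" "w!p"] small that by auto
    moreover have "fst (w!p) < N" using small that(1,3) by auto
    ultimately show ?thesis using D kb Nb that(4) abs_ge_self[of t] abs_ge_minus_self[of t] abs_ge_self[of m] abs_ge_minus_self[of m]
      by (auto simp: algebra_simps) linarith+
  qed
  have SWI: "w[p := (fst (w!p) - m', ?a)] \<in> SW k i D t'"
    if "length w = k + 1" "sum_list (map fst w) = -t + m" "p < k + 1" "m' = 0 \<or> m' = m"
       "\<forall>q<k+1. q \<noteq> p \<longrightarrow> snd (w!q) = ?a \<and> -D \<le> fst (w!q) \<and> fst (w!q) \<le> D" "t' - m' = t - m" for p m' t'
  proof -
    have b1: "-D \<le> fst (w!p) - m' \<and> fst (w!p) - m' \<le> D" using bnds that(1-4) by blast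
    have "\<forall>x\<in>set (w[p := (fst (w!p) - m', ?a)]). snd x = ?a \<and> -D \<le> fst x \<and> fst x \<le> D"
    proof
      fix x assume "x \<in> set (w[p := (fst (w!p) - m', ?a)])"
      then obtain q where q0: "q < length (w[p := (fst (w!p) - m', ?a)])" "x = (w[p := (fst (w!p) - m', ?a)]) ! q"
        by (auto simp: in_set_conv_nth)
      then have q: "q < k + 1" "x = (w[p := (fst (w!p) - m', ?a)]) ! q" using that(1) by auto
      then show "snd x = ?a \<and> -D \<le> fst x \<and> fst x \<le> D" using b1 that(1,5) by (cases "q = p") auto
    qed
    moreover have "sum_list (map fst (w[p := (fst (w!p) - m', ?a)])) = - t'"
      using sum_fst_update[of p w] that by simp
    ultimately show ?thesis using that(1) by (simp add: SW_def)
  qed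
  have others: "\<forall>q<k+1. q \<noteq> p \<longrightarrow> snd (w!q) = ?a \<and> -D \<le> fst (w!q) \<and> fst (w!q) \<le> D"
    if "b \<in> SW k i D t'" "p < k + 1" "mrg b (m', \<beta>) p = w" for b p t' m'
  proof (intro allI impI)
    fix q assume q: "q < k + 1" "q \<noteq> p"
    have "w ! q = b ! q" using that(3) q by (auto simp: mrg_def)
    moreover have "b ! q \<in> set b" using that(1) q by (simp add: SW_def)
    ultimately show "snd (w!q) = ?a \<and> -D \<le> fst (w!q) \<and> fst (w!q) \<le> D" using that(1) by (auto simp: SW_def)
  qed
  have "bij_betw ?f (PS k i D t (m, \<beta>) w) (PS k i D (t - m) (0, \<beta>) w)"
  proof (rule bij_betw_byWitness[where f'="?g"])
    show "\<forall>q\<in>PS k i D t (m, \<beta>) w. ?g (?f q) = q"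
    proof
      fix q assume "q \<in> PS k i D t (m, \<beta>) w"
      then obtain b p where q: "q = (b,p)" "b \<in> SW k i D t" "p < k + 1" "mrg b (m, \<beta>) p = w" by (auto simp: PS_def)
      have bp: "snd (b ! p) = ?a" using q(2,3) by (auto simp: SW_def)
      have "b[p := (fst (b!p), ?a)] = b" using bp by (metis list_update_id prod.collapse)
      then show "?g (?f q) = q" using q(2,3) by (simp add: q(1) SW_def)
    qed
    show "\<forall>q\<in>PS k i D (t - m) (0, \<beta>) w. ?f (?g q) = q"
    proof
      fix q assume "q \<in> PS k i D (t - m) (0, \<beta>) w"
      then obtain b p where q: "q = (b,p)" "b \<in> SW k i D (t - m)" "p < k + 1" "mrg b (0, \<beta>) p = w" by (auto simp: PS_def)
      have bp: "b ! p = (fst (b!p), ?a)" using q(2,3) by (auto simp: SW_def intro: prod_eqI)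
      then show "?f (?g q) = q" using q(2,3) by (simp add: q(1) SW_def)
    qed
    show "?f ` PS k i D t (m, \<beta>) w \<subseteq> PS k i D (t - m) (0, \<beta>) w"
    proof
      fix q' assume "q' \<in> ?f ` PS k i D t (m, \<beta>) w"
      then obtain b p where q: "q' = ?f (b,p)" "b \<in> SW k i D t" "p < k + 1" "mrg b (m, \<beta>) p = w" by (auto simp: PS_def)
      have c: "length w = k + 1" "sum_list (map fst w) = -t + m" "fst (w!p) = fst (b!p) + m" "b = w[p := (fst (w!p) - m, ?a)]"
         "snd (w ! p) = root_sum ?a \<beta>"
        using common[OF q(2,3,4)] by blast+
      have e1: "fst (b!p) + m = fst (w!p) - 0" using c(3) by simp
      have e2: "b[p := z] = w[p := z]" for z by (subst c(4)) simp
      have b': "b[p := (fst (b!p) + m, ?a)] = w[p := (fst (w!p) - 0, ?a)]" by (simp only: e1 e2)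
      have "w[p := (fst (w!p) - 0, ?a)] \<in> SW k i D (t - m)"
        by (rule SWI) (use c q others[OF q(2,3,4)] in auto)
      moreover have "mrg (w[p := (fst (w!p) - 0, ?a)]) (0, \<beta>) p = w"
      proof -
        have "mrg (w[p := (fst (w!p) - 0, ?a)]) (0, \<beta>) p = w[p := (fst (w!p), root_sum ?a \<beta>)]"
          using mrg_upd[of p w "fst (w!p) - 0" ?a 0 \<beta>] c(1) q(3) by simp
        also have "\<dots> = w" using c(5) by (metis list_update_id prod.collapse)
        finally show ?thesis .
      qed
      ultimately show "q' \<in> PS k i D (t - m) (0, \<beta>) w" using q(1,3) b' by (simp add: PS_def)
    qed
    show "?g ` PS k i D (t - m) (0, \<beta>) w \<subseteq> PS k i D t (m, \<beta>) w"
    proof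
      fix q' assume "q' \<in> ?g ` PS k i D (t - m) (0, \<beta>) w"
      then obtain b p where q: "q' = ?g (b,p)" "b \<in> SW k i D (t - m)" "p < k + 1" "mrg b (0, \<beta>) p = w" by (auto simp: PS_def)
      have c: "length w = k + 1" "sum_list (map fst w) = -t + m" "fst (w!p) = fst (b!p) + 0" "b = w[p := (fst (w!p) - 0, ?a)]"
         "snd (w ! p) = root_sum ?a \<beta>"
      proof -
        have tt: "t - m - 0 = t - m" by simp
        show "length w = k + 1" "sum_list (map fst w) = -t + m" "fst (w!p) = fst (b!p) + 0" "b = w[p := (fst (w!p) - 0, ?a)]"
         "snd (w ! p) = root_sum ?a \<beta>" using common[OF q(2,3,4) tt] by blast+
      qed
      have e1: "fst (b!p) - m = fst (w!p) - m" using c(3) by simp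
      have e2: "b[p := z] = w[p := z]" for z by (subst c(4)) simp
      have b': "b[p := (fst (b!p) - m, ?a)] = w[p := (fst (w!p) - m, ?a)]" by (simp only: e1 e2)
      have "w[p := (fst (w!p) - m, ?a)] \<in> SW k i D t"
        by (rule SWI) (use c q others[OF q(2,3,4)] in auto)
      moreover have "mrg (w[p := (fst (w!p) - m, ?a)]) (m, \<beta>) p = w"
      proof -
        have "mrg (w[p := (fst (w!p) - m, ?a)]) (m, \<beta>) p = w[p := (fst (w!p), root_sum ?a \<beta>)]"
          using mrg_upd[of p w "fst (w!p) - m" ?a m \<beta>] c(1) q(3) by simp
        also have "\<dots> = w" using c(5) by (metis list_update_id prod.collapse)
        finally show ?thesis .
      qed
      ultimately show "q' \<in> PS k i D t (m, \<beta>) w" using q(1,3) b' by (simp add: PS_def)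
    qed
  qed
  then show ?thesis by (rule bij_betw_same_card)
qed



lemma Q_supp: "Q k i D t l w \<noteq> 0 \<Longrightarrow> \<exists>b p. b \<in> SW k i D t \<and> p < k + 1 \<and> w = mrg b l p"
proof -
  assume "Q k i D t l w \<noteq> 0"
  then have "card (PS k i D t l w) \<noteq> 0" by (simp add: Q_card)
  then have "PS k i D t l w \<noteq> {}" by fastforce
  then show ?thesis by (auto simp: PS_def)
qed

lemma set_mrg: "x \<in> set (mrg b l p) \<Longrightarrow> x \<in> set b \<or> x = (fst (b!p) + fst l, root_sum (snd (b!p)) (snd l))"
  unfolding mrg_def using set_update_subset_insert by fastforce

lemma shift_JF:
  assumes i: "1 \<le> i" "i \<le> n" and pb: "pos_root n \<beta>" and C: "Cst (simple_root i) \<beta> \<noteq> 0"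
    and cv: "valid_word n c"
    and D: "D \<ge> \<bar>t\<bar> + 2 * \<bar>m\<bar> + (int k + 1) * \<bar>- sum_list (map fst c)\<bar>"
  shows "JF n k (fmul (Q k i D t (m, \<beta>) - Q k i D (t - m) (0, \<beta>)) (Xw c))"
proof -
  let ?a = "simple_root i"
  let ?g = "root_sum ?a \<beta>"
  let ?N = "- sum_list (map fst c)"
  define f where "f = Q k i D t (m, \<beta>) - Q k i D (t - m) (0, \<beta>)"
  have R: "commR n {?a, ?g}" by (rule gamma_facts[OF i pb C])
  have supp: "\<exists>b p t' m'. b \<in> SW k i D t' \<and> p < k + 1 \<and> w = mrg b (m', \<beta>) p \<and> (t',m') \<in> {(t,m),(t-m,0)}"
    if "f w \<noteq> 0" for w
  proof -
    have "Q k i D t (m, \<beta>) w \<noteq> 0 \<or> Q k i D (t - m) (0, \<beta>) w \<noteq> 0" using that by (auto simp: f_def)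
    then show ?thesis using Q_supp by blast
  qed
  show ?thesis unfolding f_def[symmetric]
  proof (rule SymC[OF R _ _ cv, where N="?N"])
    have "{w. f w \<noteq> 0} \<subseteq> (\<lambda>q. mrg (fst q) (m, \<beta>) (snd q)) ` (SW k i D t \<times> {..<k+1})
          \<union> (\<lambda>q. mrg (fst q) (0, \<beta>) (snd q)) ` (SW k i D (t - m) \<times> {..<k+1})"
    proof
      fix w assume "w \<in> {w. f w \<noteq> 0}"
      then obtain b p t' m' where b: "b \<in> SW k i D t'" "p < k + 1" "w = mrg b (m', \<beta>) p" "(t',m') \<in> {(t,m),(t-m,0)}"
        using supp by blast
      show "w \<in> (\<lambda>q. mrg (fst q) (m, \<beta>) (snd q)) ` (SW k i D t \<times> {..<k+1})
          \<union> (\<lambda>q. mrg (fst q) (0, \<beta>) (snd q)) ` (SW k i D (t - m) \<times> {..<k+1})"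
      proof (cases "(t',m') = (t,m)")
        case True
        then have "w \<in> (\<lambda>q. mrg (fst q) (m, \<beta>) (snd q)) ` (SW k i D t \<times> {..<k+1})"
          using b by (intro image_eqI[of _ _ "(b,p)"]) auto
        then show ?thesis by blast
      next
        case False
        then have "(t',m') = (t-m,0)" using b(4) by blast
        then have "w \<in> (\<lambda>q. mrg (fst q) (0, \<beta>) (snd q)) ` (SW k i D (t - m) \<times> {..<k+1})"
          using b by (intro image_eqI[of _ _ "(b,p)"]) auto
        then show ?thesis by blast
      qed
    qed
    moreover have "finite ((\<lambda>q. mrg (fst q) (m, \<beta>) (snd q)) ` (SW k i D t \<times> {..<k+1})
          \<union> (\<lambda>q. mrg (fst q) (0, \<beta>) (snd q)) ` (SW k i D (t - m) \<times> {..<k+1}))"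
      by (simp add: finite_SW)
    ultimately show "finite {w. f w \<noteq> 0}" by (rule finite_subset)
  next
    fix w x assume fw: "f w \<noteq> 0" and x: "x \<in> set w"
    obtain b p t' m' where b: "b \<in> SW k i D t'" "p < k + 1" "w = mrg b (m', \<beta>) p" using supp[OF fw] by blast
    have "snd (b!p) = ?a" using b(1,2) by (auto simp: SW_def)
    moreover have "\<forall>y\<in>set b. snd y = ?a" using b(1) by (auto simp: SW_def)
    ultimately show "snd x \<in> {?a, ?g}" using set_mrg[of x b "(m', \<beta>)" p] x b(3) by auto
  next
    show "?N + sum_list (map fst c) \<ge> 0" by simp
  next
    fix u :: word assume su: "sorted u" and small: "\<forall>x\<in>set u. fst x < ?N"
    have "{w. f w \<noteq> 0 \<and> sort w = u} = {}"
    proof (rule ccontr)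
      assume "{w. f w \<noteq> 0 \<and> sort w = u} \<noteq> {}"
      then obtain w where w: "f w \<noteq> 0" "sort w = u" by auto
      then have "set w = set u" by (metis set_sort)
      then have sw: "\<forall>x\<in>set w. fst x < ?N" using small by simp
      have "card (PS k i D t (m, \<beta>) w) = card (PS k i D (t - m) (0, \<beta>) w)"
        by (rule PS_card_eq[OF sw D])
      then have "f w = 0" by (simp add: f_def Q_card)
      with w show False by simp
    qed
    then show "(\<Sum>w\<in>{w. f w \<noteq> 0 \<and> sort w = u}. f w) = 0" by (simp only: sum.empty)
  qed
qed

lemma MP_end0:
  assumes "inF n f" "valid_word n c" "pos_root n \<beta>"
  shows "MP n (fmul f (Xw (c @ [(0, \<beta>)])))"
  unfolding MP_def
proof (intro conjI allI impI)
  show "inF n (fmul f (Xw (c @ [(0, \<beta>)])))" using assms by (intro inF_fmul inF_Xw) auto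
  fix w assume "fmul f (Xw (c @ [(0, \<beta>)])) w \<noteq> 0"
  then obtain u v where uv: "w = u @ v" "Xw (c @ [(0, \<beta>)]) v \<noteq> 0" using fmul_supp by blast
  then have v: "v = c @ [(0, \<beta>)]" by (simp add: Xw_def)
  have "in_Mplus [(0, \<beta>)]" by (simp add: in_Mplus_def)
  then have "in_Mplus (c @ [(0, \<beta>)])" by (rule in_Mplus_append)
  then show "in_Mplus w" unfolding uv v by (rule in_Mplus_append)
qed

lemma ex_bound:
  "(\<forall>p<(L::nat). \<exists>D0::int. \<forall>D\<ge>D0. P p D) \<Longrightarrow> \<exists>D0. \<forall>D\<ge>D0. \<forall>p<L. P p D"
proof (induction L)
  case 0 then show ?case by auto
next
  case (Suc L)
  then obtain D1 where D1: "\<forall>D\<ge>D1. \<forall>p<L. P p D" by auto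
  obtain D2 where D2: "\<forall>D\<ge>D2. P L D" using Suc.prems by auto
  show ?case
  proof (intro exI[of _ "max D1 D2"] allI impI)
    fix D p assume "max D1 D2 \<le> D" "p < Suc L"
    then show "P p D" using D1 D2 by (cases "p = L") auto
  qed
qed

definition Good :: "nat \<Rightarrow> nat \<Rightarrow> nat \<Rightarrow> word \<Rightarrow> bool" where
  "Good n k i c \<longleftrightarrow> (\<forall>t. \<exists>D0. \<forall>D\<ge>D0. JF n k (fmul (Sfn k i D t) (Xw c)))"

lemma valid_mrg: "valid_word n c \<Longrightarrow> p < length c \<Longrightarrow> pos_root n (snd l) \<Longrightarrow> Cst (snd (c!p)) (snd l) \<noteq> 0 \<Longrightarrow> valid_word n (mrg c l p)"
proof -
  assume a: "valid_word n c" "p < length c" "pos_root n (snd l)" "Cst (snd (c!p)) (snd l) \<noteq> 0"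
  have "pos_root n (snd (c!p))" using a(1,2) by (auto simp: valid_word_def)
  then have "pos_root n (root_sum (snd (c!p)) (snd l))" using root_sum_pos a(3,4) by blast
  show ?thesis unfolding valid_word_def
  proof
    fix x assume "x \<in> set (mrg c l p)"
    then have "x \<in> set c \<or> x = (fst (c!p) + fst l, root_sum (snd (c!p)) (snd l))" by (rule set_mrg)
    then show "pos_root n (snd x)" using a(1) \<open>pos_root n (root_sum (snd (c!p)) (snd l))\<close>
      by (auto simp: valid_word_def)
  qed
qed

lemma B_JF:
  assumes i: "1 \<le> i" "i \<le> n" and pb: "pos_root n \<beta>" and cv: "valid_word n c"
    and IH: "\<forall>p<length c. Cst (snd (c!p)) \<beta> \<noteq> 0 \<longrightarrow> JF n k (fmul (Sfn k i D t) (Xw (mrg c (0,\<beta>) p)))"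
  shows "JF n k (fmul (Sfn k i D t) (Xw ((0,\<beta>) # c)))"
proof -
  let ?S = "Sfn k i D t"
  have S: "inF n ?S" using inF0_Sfn[OF i] by (rule inF0_imp_inF)
  have tau: "Xw (c @ [(0,\<beta>)]) - Xw ((0,\<beta>) # c) - commsum c (0,\<beta>) \<in> tildeI n"
    using comm_lemma[OF cv] pb by simp
  have eq: "fmul ?S (Xw ((0,\<beta>) # c)) = fmul ?S (Xw (c @ [(0,\<beta>)])) - fmul ?S (commsum c (0,\<beta>))
        - fmul ?S (Xw (c @ [(0,\<beta>)]) - Xw ((0,\<beta>) # c) - commsum c (0,\<beta>))"
    by (simp add: fmul_diff_right)
  have j1: "JF n k (fmul ?S (Xw (c @ [(0,\<beta>)])))" using MP_end0[OF S cv pb] by (rule JF_MP)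
  have j3: "JF n k (fmul ?S (Xw (c @ [(0,\<beta>)]) - Xw ((0,\<beta>) # c) - commsum c (0,\<beta>)))"
    using tI_lmul[OF tau S] by (rule JF_tI)
  have "fmul ?S (commsum c (0,\<beta>)) = (\<Sum>p<length c. fscale (Cst (snd (c!p)) \<beta>) (fmul ?S (Xw (mrg c (0,\<beta>) p))))"
    unfolding commsum_def by (simp add: fmul_sum_right fmul_scale_right)
  moreover have "JF n k (\<Sum>p<length c. fscale (Cst (snd (c!p)) \<beta>) (fmul ?S (Xw (mrg c (0,\<beta>) p))))"
  proof (intro JF_sum)
    fix p assume p: "p \<in> {..<length c}"
    show "JF n k (fscale (Cst (snd (c!p)) \<beta>) (fmul ?S (Xw (mrg c (0,\<beta>) p))))"
    proof (cases "Cst (snd (c!p)) \<beta> = 0")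
      case True then show ?thesis by (simp add: JF_zero)
    next
      case False then show ?thesis using IH p by (intro JF_scale) auto
    qed
  qed
  ultimately have j2: "JF n k (fmul ?S (commsum c (0,\<beta>)))" by simp
  show ?thesis unfolding eq by (intro JF_diff j1 j2 j3)
qed



lemma step_Good:
  assumes i: "1 \<le> i" "i \<le> n" and cv: "valid_word n ((m, \<beta>) # c)"
    and IH: "\<And>c'. valid_word n c' \<Longrightarrow> length c' = length c \<Longrightarrow> Good n k i c'"
  shows "Good n k i ((m, \<beta>) # c)"
  unfolding Good_def
proof
  fix t
  let ?a = "simple_root i"
  let ?C = "Cst ?a \<beta>"
  have pb: "pos_root n \<beta>" and vc: "valid_word n c" using cv by auto
  obtain D1 where D1: "\<forall>D\<ge>D1. JF n k (fmul (Sfn k i D t) (Xw c))" using IH[OF vc refl] unfolding Good_def by blast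
  obtain D2 where D2: "\<forall>D\<ge>D2. JF n k (fmul (Sfn k i D (t - m)) (Xw c))" using IH[OF vc refl] unfolding Good_def by blast
  have "\<forall>p<length c. \<exists>D0::int. \<forall>D\<ge>D0. Cst (snd (c!p)) \<beta> \<noteq> 0 \<longrightarrow> JF n k (fmul (Sfn k i D (t - m)) (Xw (mrg c (0,\<beta>) p)))"
  proof (intro allI impI)
    fix p assume p: "p < length c"
    show "\<exists>D0::int. \<forall>D\<ge>D0. Cst (snd (c!p)) \<beta> \<noteq> 0 \<longrightarrow> JF n k (fmul (Sfn k i D (t - m)) (Xw (mrg c (0,\<beta>) p)))"
    proof (cases "Cst (snd (c!p)) \<beta> = 0")
      case True then show ?thesis by blast
    next
      case False
      have "valid_word n (mrg c (0,\<beta>) p)" using valid_mrg[OF vc p] pb False by simp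
      moreover have "length (mrg c (0,\<beta>) p) = length c" by (simp add: mrg_def)
      ultimately have "Good n k i (mrg c (0,\<beta>) p)" by (rule IH)
      then show ?thesis unfolding Good_def by blast
    qed
  qed
  then have "\<exists>D0::int. \<forall>D\<ge>D0. \<forall>p<length c. Cst (snd (c!p)) \<beta> \<noteq> 0 \<longrightarrow> JF n k (fmul (Sfn k i D (t - m)) (Xw (mrg c (0,\<beta>) p)))"
    by (rule ex_bound)
  then obtain D3 where D3: "\<forall>D\<ge>D3. \<forall>p<length c. Cst (snd (c!p)) \<beta> \<noteq> 0 \<longrightarrow> JF n k (fmul (Sfn k i D (t - m)) (Xw (mrg c (0,\<beta>) p)))"
    by blast
  define D4 where "D4 = \<bar>t\<bar> + 2 * \<bar>m\<bar> + (int k + 1) * \<bar>- sum_list (map fst c)\<bar>"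
  show "\<exists>D0. \<forall>D\<ge>D0. JF n k (fmul (Sfn k i D t) (Xw ((m, \<beta>) # c)))"
  proof (intro exI[of _ "max (max D1 D2) (max D3 D4)"] allI impI)
    fix D assume D: "max (max D1 D2) (max D3 D4) \<le> D"
    let ?S1 = "Sfn k i D t" and ?S2 = "Sfn k i D (t - m)"
    let ?Q1 = "Q k i D t (m, \<beta>)" and ?Q2 = "Q k i D (t - m) (0, \<beta>)"
    define \<tau>1 where "\<tau>1 = fmul ?S1 (Xw [(m,\<beta>)]) - fmul (Xw [(m,\<beta>)]) ?S1 - fscale ?C ?Q1"
    define \<tau>2 where "\<tau>2 = fmul ?S2 (Xw [(0,\<beta>)]) - fmul (Xw [(0,\<beta>)]) ?S2 - fscale ?C ?Q2"
    have t1: "\<tau>1 \<in> tildeI n" unfolding \<tau>1_def using comm_S[OF i, of "(m,\<beta>)"] pb by simp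
    have t2: "\<tau>2 \<in> tildeI n" unfolding \<tau>2_def using comm_S[OF i, of "(0,\<beta>)"] pb by simp
    have vX: "inF n (Xw c)" using vc by (rule inF_Xw)
    have eA: "fmul ?S1 (Xw ((m,\<beta>) # c)) = fmul \<tau>1 (Xw c) + fmul (Xw [(m,\<beta>)]) (fmul ?S1 (Xw c)) + fscale ?C (fmul ?Q1 (Xw c))"
      unfolding \<tau>1_def by (simp add: fmul_diff_left fmul_scale_left fmul_assoc fmul_Xw)
    have eB: "fmul ?S2 (Xw ((0,\<beta>) # c)) = fmul \<tau>2 (Xw c) + fmul (Xw [(0,\<beta>)]) (fmul ?S2 (Xw c)) + fscale ?C (fmul ?Q2 (Xw c))"
      unfolding \<tau>2_def by (simp add: fmul_diff_left fmul_scale_left fmul_assoc fmul_Xw)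
    have jB: "JF n k (fmul ?S2 (Xw ((0,\<beta>) # c)))"
      using D3 D by (intro B_JF[OF i pb vc]) auto
    have jt2: "JF n k (fmul \<tau>2 (Xw c))" using tI_rmul[OF t2 vX] by (rule JF_tI)
    have jt1: "JF n k (fmul \<tau>1 (Xw c))" using tI_rmul[OF t1 vX] by (rule JF_tI)
    have jS1: "JF n k (fmul (Xw [(m,\<beta>)]) (fmul ?S1 (Xw c)))"
      by (rule JF_lmul) (use D1 D cv in \<open>auto intro: inF0_Xw\<close>)
    have jS2: "JF n k (fmul (Xw [(0,\<beta>)]) (fmul ?S2 (Xw c)))"
      by (rule JF_lmul) (use D2 D pb in \<open>auto intro: inF0_Xw\<close>)
    have jQ2: "JF n k (fscale ?C (fmul ?Q2 (Xw c)))"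
    proof -
      have "fscale ?C (fmul ?Q2 (Xw c)) = fmul ?S2 (Xw ((0,\<beta>) # c)) - fmul \<tau>2 (Xw c) - fmul (Xw [(0,\<beta>)]) (fmul ?S2 (Xw c))"
        using eB by simp
      then show ?thesis using jB jt2 jS2 by (simp add: JF_diff)
    qed
    have jQ: "JF n k (fscale ?C (fmul (?Q1 - ?Q2) (Xw c)))"
    proof (cases "?C = 0")
      case True then show ?thesis by (simp add: JF_zero)
    next
      case False
      have "D4 \<le> D" using D by simp
      then show ?thesis using shift_JF[OF i pb False vc] unfolding D4_def by (intro JF_scale) auto
    qed
    have "fscale ?C (fmul ?Q1 (Xw c)) = fscale ?C (fmul (?Q1 - ?Q2) (Xw c)) + fscale ?C (fmul ?Q2 (Xw c))"
      by (simp add: fmul_diff_left fscale_diff)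
    then have jQ1: "JF n k (fscale ?C (fmul ?Q1 (Xw c)))" using jQ jQ2 by (simp add: JF_add)
    show "JF n k (fmul ?S1 (Xw ((m, \<beta>) # c)))" unfolding eA by (intro JF_add jt1 jS1 jQ1)
  qed
qed

lemma Good_all:
  assumes i: "1 \<le> i" "i \<le> n"
  shows "valid_word n c \<Longrightarrow> Good n k i c"
proof (induction "length c" arbitrary: c rule: less_induct)
  case less
  show ?case
  proof (cases c)
    case Nil
    show ?thesis unfolding Good_def Nil
    proof
      fix t show "\<exists>D0. \<forall>D\<ge>D0. JF n k (fmul (Sfn k i D t) (Xw []))"
        using base_case[OF i] by auto
    qed
  next
    case (Cons l c')
    obtain m \<beta> where l: "l = (m, \<beta>)" by (cases l) auto
    show ?thesis unfolding Cons l
    proof (rule step_Good[OF i])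
      show "valid_word n ((m, \<beta>) # c')" using less.prems Cons l by simp
      fix c'' assume "valid_word n c''" "length c'' = length c'"
      then show "Good n k i c''" using less.hyps Cons by simp
    qed
  qed
qed



lemma calR_nz: "calR k i t w \<noteq> 0 \<Longrightarrow> length w = k + 1 \<and> (\<forall>x\<in>set w. snd x = simple_root i) \<and> sum_list (map fst w) = -t
   \<and> ((\<forall>x\<in>set w. fst x \<le> -1) \<or> (sorted (map fst w) \<and> fst (last w) \<ge> 0))"
  by (simp add: calR_def split: if_split_asm)

lemma drop_last: "w \<noteq> [] \<Longrightarrow> drop (length w - 1) w = [last w]"
  by (induction w rule: rev_induct) auto

lemma word_le_last: "word_le w j \<Longrightarrow> w \<noteq> [] \<Longrightarrow> fst (last w) \<le> j"
proof -
  assume a: "word_le w j" "w \<noteq> []"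
  then have "length w - 1 < length w" by (cases w) auto
  then have "sum_list (map fst (drop (length w - 1) w)) \<le> j" using a(1) unfolding word_le_def by blast
  then show ?thesis using drop_last[OF a(2)] by simp
qed

lemma le_last_fst: "sorted (map fst w) \<Longrightarrow> x \<in> set w \<Longrightarrow> fst x \<le> fst (last (w::word))"
proof -
  assume a: "sorted (map fst w)" "x \<in> set w"
  then have "w \<noteq> []" by auto
  have "fst x \<le> last (map fst w)" using sorted_le_last[OF a(1)] a(2) by auto
  then show ?thesis using \<open>w \<noteq> []\<close> by (simp add: last_map)
qed

lemma in_Mplus_last: assumes "u \<noteq> []" "fst (last u) + sum_list (map fst c) \<ge> 0" shows "in_Mplus (u @ c)"
proof -
  have u: "u = butlast u @ [last u]" using assms(1) by simp
  have "drop (length u - 1) (u @ c) = last u # c" by (subst u, subst (2) u) simp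
  moreover have "length u - 1 < length (u @ c)" using assms(1) by (cases u) auto
  ultimately show ?thesis unfolding in_Mplus_def using assms(2) by (intro conjI exI[of _ "length u - 1"]) auto
qed

lemma inF_calR:
  assumes i: "1 \<le> i" "i \<le> n"
  shows "inF n (calR k i t)"
  unfolding inF_def
proof (intro conjI allI impI)
  fix w assume "calR k i t w \<noteq> 0"
  then show "valid_word n w" using calR_nz[of k i t w] pos_alpha[OF i] by (auto simp: valid_word_def)
next
  fix j
  let ?lo = "- \<bar>t\<bar> - int k * \<bar>j\<bar>" and ?hi = "\<bar>j\<bar>"
  have "{w. word_le w j \<and> calR k i t w \<noteq> 0} \<subseteq> {w. length w = k + 1 \<and> (\<forall>x\<in>set w. snd x = simple_root i \<and> ?lo \<le> fst x \<and> fst x \<le> ?hi)}"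
  proof
    fix w assume "w \<in> {w. word_le w j \<and> calR k i t w \<noteq> 0}"
    then have wl: "word_le w j" and nz: "calR k i t w \<noteq> 0" by auto
    note c = calR_nz[OF nz]
    have kb: "int k * j \<le> int k * \<bar>j\<bar>" by (rule mult_left_mono) auto
    have "?lo \<le> fst x \<and> fst x \<le> ?hi" if x: "x \<in> set w" for x
    proof (cases "\<forall>x\<in>set w. fst x \<le> -1")
      case True
      have "fst x \<ge> -t - int k * (-1)"
        by (rule mode_lower[of "map fst w" k "-1" "-t"]) (use c True x in auto)
      then show ?thesis using True x abs_ge_self[of t] abs_ge_minus_self[of t] kb
        by (smt (verit) abs_ge_zero mult_nonneg_nonneg of_nat_0_le_iff)
    next
      case False
      then have s: "sorted (map fst w)" "fst (last w) \<ge> 0" using c by auto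
      have ne: "w \<noteq> []" using x by auto
      have "\<forall>y\<in>set w. fst y \<le> j" using le_last_fst[OF s(1)] word_le_last[OF wl ne] by force
      then have up: "fst x \<le> j" using x by auto
      have "fst x \<ge> -t - int k * j"
        by (rule mode_lower[of "map fst w" k j "-t"]) (use c \<open>\<forall>y\<in>set w. fst y \<le> j\<close> x in auto)
      then show ?thesis using up abs_ge_self[of t] abs_ge_minus_self[of t] abs_ge_self[of j] kb by linarith
    qed
    then show "w \<in> {w. length w = k + 1 \<and> (\<forall>x\<in>set w. snd x = simple_root i \<and> ?lo \<le> fst x \<and> fst x \<le> ?hi)}"
      using c by auto
  qed
  then show "finite {w. word_le w j \<and> calR k i t w \<noteq> 0}" using finite_words by (rule finite_subset)
qed



lemma sorted_fst_imp_sorted: "(\<forall>x\<in>set w. snd x = r) \<Longrightarrow> sorted (map fst w) \<Longrightarrow> sorted (w::word)"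
  by (induction w) (auto simp: less_eq_prod_def)

lemma sorted_imp_sorted_fst: "sorted (w::word) \<Longrightarrow> sorted (map fst w)"
  by (induction w) (auto simp: less_eq_prod_def)

lemma sum_map_mset: "sum_list (map (f::'a \<Rightarrow> int) xs) = sum_mset (image_mset f (mset xs))"
  by (induction xs) auto

lemma sum_map_mset_eq: "mset xs = mset ys \<Longrightarrow> sum_list (map (f::'a \<Rightarrow> int) xs) = sum_list (map f ys)"
  by (simp add: sum_map_mset)

lemma multinom_card: "multinom ms = card (permutations_of_multiset (mset ms))"
  by (simp add: multinom_def card_permutations_of_multiset)

lemma map_pair_fst: "\<forall>x\<in>set w. snd x = r \<Longrightarrow> map (\<lambda>m. (m, r)) (map fst w) = w"
  by (induction w) auto

lemma card_perm_fst:
  assumes a: "\<forall>x\<in>set u. snd x = r"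
  shows "card (permutations_of_multiset (mset (u::word))) = multinom (map fst u)"
proof -
  let ?A = "permutations_of_multiset (mset u)" and ?B = "permutations_of_multiset (mset (map fst u))"
  let ?g = "map (\<lambda>m. (m, r))"
  have l: "\<forall>w\<in>?A. ?g (map fst w) = w"
  proof
    fix w assume "w \<in> ?A"
    then have "mset w = mset u" by (simp add: permutations_of_multiset_def)
    then have "set w = set u" by (rule mset_eq_setD)
    then have "\<forall>x\<in>set w. snd x = r" using a by simp
    then show "?g (map fst w) = w" by (rule map_pair_fst)
  qed
  have r: "\<forall>ms\<in>?B. map fst (?g ms) = ms" by (simp add: comp_def)
  have i1: "map fst ` ?A \<subseteq> ?B" by (auto simp: permutations_of_multiset_def)
  have gu: "?g (map fst u) = u" using a by (rule map_pair_fst)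
  have i2: "?g ` ?B \<subseteq> ?A"
  proof
    fix w assume "w \<in> ?g ` ?B"
    then obtain ms where ms: "mset ms = mset (map fst u)" "w = ?g ms" by (auto simp: permutations_of_multiset_def)
    have "mset w = image_mset (\<lambda>m. (m, r)) (mset ms)" using ms(2) by simp
    also have "\<dots> = mset (?g (map fst u))" by (simp only: ms(1) mset_map)
    also have "\<dots> = mset u" using gu by simp
    finally show "w \<in> ?A" by (simp add: permutations_of_multiset_def)
  qed
  have "bij_betw (map fst) ?A ?B" using bij_betw_byWitness[OF l r i1 i2] .
  then show ?thesis by (simp add: bij_betw_same_card multinom_card)
qed

lemma calR_neg: "length w = k + 1 \<Longrightarrow> (\<forall>x\<in>set w. snd x = simple_root i) \<Longrightarrow> sum_list (map fst w) = -t
   \<Longrightarrow> (\<forall>x\<in>set w. fst x \<le> -1) \<Longrightarrow> calR k i t w = 1"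
  by (simp add: calR_def)

lemma calR_sorted: "length w = k + 1 \<Longrightarrow> (\<forall>x\<in>set w. snd x = simple_root i) \<Longrightarrow> sum_list (map fst w) = -t
   \<Longrightarrow> \<not> (\<forall>x\<in>set w. fst x \<le> -1) \<Longrightarrow> sorted (map fst w) \<Longrightarrow> fst (last w) \<ge> 0 \<Longrightarrow> calR k i t w = of_nat (multinom (map fst w))"
  unfolding calR_def by (simp only: if_True if_False simp_thms) simp



lemma sort_eq_mset: "sorted u \<Longrightarrow> sort w = u \<longleftrightarrow> mset w = mset (u::word)"
proof
  assume "sorted u" "sort w = u"
  then show "mset w = mset u" by (metis mset_sort)
next
  assume s: "sorted u" and m: "mset w = mset u"
  have "sort w = sorted_list_of_multiset (mset w)" by simp
  also have "\<dots> = sort u" using m by simp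
  also have "\<dots> = u" using s by (rule sorted_sort_id)
  finally show "sort w = u" .
qed

lemma claimA:
  assumes i: "1 \<le> i" "i \<le> n" and cv: "valid_word n c"
  shows "\<exists>D0. \<forall>D\<ge>D0. JF n k (fmul (calR k i t - Sfn k i D t) (Xw c))"
proof -
  let ?a = "simple_root i"
  define N0 where "N0 = \<bar>sum_list (map fst c)\<bar> + 1"
  have N0: "N0 \<ge> 1" "N0 + sum_list (map fst c) \<ge> 0" unfolding N0_def by auto
  define rest where "rest = (\<lambda>w. if \<exists>x\<in>set w. fst x \<ge> N0 then calR k i t w else 0)"
  define B where "B = (\<lambda>w. if \<forall>x\<in>set w. fst x < N0 then calR k i t w else 0)"
  have split: "calR k i t = rest + B" unfolding rest_def B_def by (rule ext) (auto simp: not_le)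
  have Fc: "inF n (calR k i t)" by (rule inF_calR[OF i])
  have Frest: "inF n rest" using Fc by (rule inF_mono) (auto simp: rest_def split: if_split_asm)
  have MPrest: "MP n (fmul rest (Xw c))"
    unfolding MP_def
  proof (intro conjI allI impI)
    show "inF n (fmul rest (Xw c))" using Frest inF_Xw[OF cv] by (rule inF_fmul)
    fix w assume "fmul rest (Xw c) w \<noteq> 0"
    then obtain u v where uv: "w = u @ v" "rest u \<noteq> 0" "Xw c v \<noteq> 0" using fmul_supp by blast
    have v: "v = c" using uv(3) by (simp add: Xw_def)
    obtain x where x: "x \<in> set u" "fst x \<ge> N0" and nz: "calR k i t u \<noteq> 0"
      using uv(2) by (auto simp: rest_def split: if_split_asm)
    note cc = calR_nz[OF nz]
    have "\<not> (\<forall>x\<in>set u. fst x \<le> -1)" using x N0 by force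
    then have "sorted (map fst u)" using cc by blast
    then have "fst x \<le> fst (last u)" using le_last_fst x(1) by blast
    moreover have "u \<noteq> []" using x by auto
    ultimately show "in_Mplus w" unfolding uv v using N0 x by (intro in_Mplus_last) auto
  qed
  define D0 where "D0 = \<bar>t\<bar> + int k * N0 + N0"
  show ?thesis
  proof (intro exI[of _ D0] allI impI)
    fix D assume D: "D0 \<le> D"
    let ?S = "Sfn k i D t"
    have kN: "0 \<le> int k * N0" using N0 by simp
    have eq: "fmul (calR k i t - ?S) (Xw c) = fmul rest (Xw c) + fmul (B - ?S) (Xw c)"
      unfolding split by (simp add: fmul_add_left fmul_diff_left)
    have Bsupp: "B w \<noteq> 0 \<Longrightarrow> length w = k + 1 \<and> (\<forall>x\<in>set w. snd x = ?a \<and> -\<bar>t\<bar> - int k * N0 \<le> fst x \<and> fst x \<le> N0)" for w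
    proof -
      assume "B w \<noteq> 0"
      then have sm: "\<forall>x\<in>set w. fst x < N0" and nz: "calR k i t w \<noteq> 0" by (auto simp: B_def split: if_split_asm)
      note cc = calR_nz[OF nz]
      have "-t - int k * N0 \<le> fst x" if "x \<in> set w" for x
        by (rule mode_lower[of "map fst w" k N0 "-t"]) (use cc sm that in auto)
      then show ?thesis using cc sm abs_ge_self[of t] abs_ge_minus_self[of t] by fastforce
    qed
    have SWin: "w \<in> SW k i D t" if "length w = k + 1" "\<forall>x\<in>set w. snd x = ?a" "sum_list (map fst w) = -t"
      "\<forall>x\<in>set w. fst x < N0" for w
    proof -
      have "-t - int k * N0 \<le> fst x" if "x \<in> set w" for x
        by (rule mode_lower[of "map fst w" k N0 "-t"]) (use \<open>length w = k + 1\<close> \<open>\<forall>x\<in>set w. fst x < N0\<close> \<open>sum_list (map fst w) = -t\<close> that in auto)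
      then have "\<forall>x\<in>set w. -D \<le> fst x \<and> fst x \<le> D"
      proof (intro ballI)
        fix x assume x: "x \<in> set w"
        have l: "-t - int k * N0 \<le> fst x" using \<open>\<And>x. x \<in> set w \<Longrightarrow> -t - int k * N0 \<le> fst x\<close> x .
        have u: "fst x < N0" using that(4) x by blast
        show "-D \<le> fst x \<and> fst x \<le> D" using l u D abs_ge_self[of t] abs_ge_minus_self[of t] kN N0(1) unfolding D0_def by linarith
      qed
      then show ?thesis using that unfolding SW_def by blast
    qed
    have jB: "JF n k (fmul (B - ?S) (Xw c))"
    proof (rule SymC[OF commR_alpha[OF i] _ _ cv, where N=N0])
      have "{w. (B - ?S) w \<noteq> 0} \<subseteq> {w. length w = k + 1 \<and> (\<forall>x\<in>set w. snd x = ?a \<and> -\<bar>t\<bar> - int k * N0 \<le> fst x \<and> fst x \<le> N0)} \<union> SW k i D t"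
        using Bsupp by (auto simp: Sfn_def split: if_split_asm)
      moreover have "finite ({w. length w = k + 1 \<and> (\<forall>x\<in>set w. snd x = ?a \<and> -\<bar>t\<bar> - int k * N0 \<le> fst x \<and> fst x \<le> N0)} \<union> SW k i D t)"
        using finite_words finite_SW by blast
      ultimately show "finite {w. (B - ?S) w \<noteq> 0}" by (rule finite_subset)
    next
      fix w x assume "(B - ?S) w \<noteq> 0" "x \<in> set w"
      then show "snd x \<in> {?a}" using Bsupp[of w] by (auto simp: Sfn_def SW_def split: if_split_asm)
    next
      show "N0 + sum_list (map fst c) \<ge> 0" by (rule N0(2))
    next
      fix u :: word assume su: "sorted u" and small: "\<forall>x\<in>set u. fst x < N0"
      let ?P = "permutations_of_multiset (mset u)"
      have Peq: "{w. (B - ?S) w \<noteq> 0 \<and> sort w = u} = {w\<in>?P. (B - ?S) w \<noteq> 0}"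
        using sort_eq_mset[OF su] by (auto simp: permutations_of_multiset_def)
      have fP: "finite ?P" by simp
      have Pw: "length w = length u \<and> set w = set u \<and> sum_list (map fst w) = sum_list (map fst u)" if "w \<in> ?P" for w
      proof -
        have m: "mset w = mset u" using that by (simp add: permutations_of_multiset_def)
        show ?thesis using mset_eq_length[OF m] mset_eq_setD[OF m] sum_map_mset_eq[OF m] by simp
      qed
      have "(\<Sum>w\<in>{w. (B - ?S) w \<noteq> 0 \<and> sort w = u}. (B - ?S) w) = (\<Sum>w\<in>?P. (B - ?S) w)"
        unfolding Peq by (rule sum.mono_neutral_left[OF fP]) auto
      also have "\<dots> = (\<Sum>w\<in>?P. B w) - (\<Sum>w\<in>?P. ?S w)" by (simp add: sum_subtractf)
      also have "(\<Sum>w\<in>?P. B w) = (\<Sum>w\<in>?P. ?S w)"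
      proof (cases "length u = k + 1 \<and> (\<forall>x\<in>set u. snd x = ?a) \<and> sum_list (map fst u) = -t")
        case False
        have "B w = 0 \<and> ?S w = 0" if "w \<in> ?P" for w
        proof -
          have "\<not> (length w = k + 1 \<and> (\<forall>x\<in>set w. snd x = ?a) \<and> sum_list (map fst w) = -t)"
            using False Pw[OF that] by simp
          then have "calR k i t w = 0" using calR_nz[of k i t w] by blast
          moreover have "w \<notin> SW k i D t" using \<open>\<not> (length w = k + 1 \<and> _)\<close> by (auto simp: SW_def)
          ultimately show ?thesis by (simp add: B_def Sfn_def)
        qed
        then show ?thesis by simp
      next
        case True
        have Sw: "?S w = 1" if "w \<in> ?P" for w
        proof -
          have "w \<in> SW k i D t" using SWin[of w] True Pw[OF that] small by simp
          then show ?thesis by (simp add: Sfn_def)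
        qed
        have Sc: "(\<Sum>w\<in>?P. ?S w) = of_nat (card ?P)" using Sw by simp
        have Bw: "B w = calR k i t w" if "w \<in> ?P" for w using Pw[OF that] small by (simp add: B_def)
        show ?thesis
        proof (cases "\<forall>x\<in>set u. fst x \<le> -1")
          case True2: True
          have "B w = 1" if "w \<in> ?P" for w
            using Bw[OF that] Pw[OF that] True True2 calR_neg[of w k i t] by simp
          then show ?thesis using Sc by simp
        next
          case False2: False
          have uP: "u \<in> ?P" by (simp add: permutations_of_multiset_def)
          have z: "B w = 0" if "w \<in> ?P - {u}" for w
          proof (rule ccontr)
            assume "B w \<noteq> 0"
            then have nz: "calR k i t w \<noteq> 0" using Bw that by simp
            have "\<not> (\<forall>x\<in>set w. fst x \<le> -1)" using False2 Pw that by auto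
            then have "sorted (map fst w)" using calR_nz[OF nz] by blast
            then have "sorted w" using True Pw that by (intro sorted_fst_imp_sorted[of _ ?a]) auto
            then have "w = sort w" by (simp add: sorted_sort_id)
            also have "sort w = u" using sort_eq_mset[OF su] that by (simp add: permutations_of_multiset_def)
            finally show False using that by simp
          qed
          have "(\<Sum>w\<in>?P. B w) = B u + (\<Sum>w\<in>?P - {u}. B w)" by (rule sum.remove[OF fP uP])
          also have "(\<Sum>w\<in>?P - {u}. B w) = 0" using z by simp
          also have "B u = calR k i t u" using Bw[OF uP] .
          also have "\<dots> = of_nat (multinom (map fst u))"
          proof (rule calR_sorted)
            show "length u = k + 1" "\<forall>x\<in>set u. snd x = ?a" "sum_list (map fst u) = -t" using True by auto
            show "\<not> (\<forall>x\<in>set u. fst x \<le> -1)" by (rule False2)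
            show su': "sorted (map fst u)" using su by (rule sorted_imp_sorted_fst)
            obtain x where x: "x \<in> set u" "\<not> fst x \<le> -1" using False2 by auto
            have "fst x \<le> fst (last u)" using le_last_fst[OF su' x(1)] .
            then show "fst (last u) \<ge> 0" using x(2) by simp
          qed
          also have "multinom (map fst u) = card ?P" using card_perm_fst[of u ?a] True by simp
          finally show ?thesis using Sc by simp
        qed
      qed
      finally show "(\<Sum>w\<in>{w. (B - ?S) w \<noteq> 0 \<and> sort w = u}. (B - ?S) w) = 0" by simp
    qed
    show "JF n k (fmul (calR k i t - ?S) (Xw c))" unfolding eq by (intro JF_add JF_MP MPrest jB)
  qed
qed



theorem corollary4p3:
  fixes n k i :: nat and t :: int and a :: fn
  assumes "n \<ge> 2" and "k \<ge> 1" and "1 \<le> i" and "i \<le> n"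
    and "inUneg n a"
  shows "\<exists>x \<in> Ilift n k. \<exists>\<mu>. inF n \<mu> \<and> (\<forall>w. \<mu> w \<noteq> 0 \<longrightarrow> in_Mplus w) \<and>
           fsub (fsub (fmul (calR k i t) a) x) \<mu> \<in> tildeI n"
proof -
  have i: "1 \<le> i" "i \<le> n" using assms(3,4) .
  have a0: "inF0 n a" using assms(5) by (simp add: inUneg_def)
  define S where "S = {w. a w \<noteq> 0}"
  have fS: "finite S" using a0 by (simp add: inF0_def S_def)
  have arep: "a = (\<Sum>w\<in>S. fscale (a w) (Xw w))" using finite_rep[OF fS] by (simp add: S_def)
  have each: "JF n k (fmul (calR k i t) (Xw w))" if w: "w \<in> S" for w
  proof -
    have vw: "valid_word n w" using a0 w by (auto simp: inF0_def S_def)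
    obtain D1 where D1: "\<forall>D\<ge>D1. JF n k (fmul (calR k i t - Sfn k i D t) (Xw w))" using claimA[OF i vw] by blast
    obtain D2 where D2: "\<forall>D\<ge>D2. JF n k (fmul (Sfn k i D t) (Xw w))" using Good_all[OF i vw] unfolding Good_def by blast
    let ?D = "max D1 D2"
    have "fmul (calR k i t) (Xw w) = fmul (calR k i t - Sfn k i ?D t) (Xw w) + fmul (Sfn k i ?D t) (Xw w)"
      by (simp add: fmul_diff_left)
    then show ?thesis using D1 D2 JF_add by simp
  qed
  have "fmul (calR k i t) a = (\<Sum>w\<in>S. fscale (a w) (fmul (calR k i t) (Xw w)))"
    by (subst arep) (simp add: fmul_sum_right fmul_scale_right)
  then have "JF n k (fmul (calR k i t) a)" using each by (simp add: JF_sum JF_scale)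
  then obtain x y \<mu> where x: "x \<in> Ilift n k" and y: "y \<in> tildeI n" and mu: "MP n \<mu>"
    and eq: "fmul (calR k i t) a = x + y + \<mu>" unfolding JF_def by blast
  have "fsub (fsub (fmul (calR k i t) a) x) \<mu> = y" using eq by simp
  then show ?thesis using x y mu unfolding MP_def by auto
qed

end
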